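(* Fix an outcome $s$, vectors $\mathbf{q}^b,\mathbf{q}^p\in\mathbb{R}^N$ and a demand $\mathbf{d}_s\in\mathbb{R}^N$. Let $\mathbf{r}^p_s$ be an optimal solution of $FR(\mathbf{q}^b,\mathbf{q}^p,\mathbf{d}_s)$ and $(\mathbf{r}^{p\prime}_s,\boldsymbol\omega_s',\mathbf{v}_s',\boldsymbol\phi_s')$ an optimal solution of $FR'(\mathbf{q}^b,\mathbf{q}^p,\mathbf{d}_s)$. Then: (i) $\boldsymbol\omega_s'=0$; (ii) $\mathbf{r}^p_s=\mathbf{r}^{p\prime}_s$; (iii) $\mathbf{H}(\mathbf{q}^b+\mathbf{q}^p+\mathbf{r}^p_s-\mathbf{d}_s)=\mathbf{B}\mathbf{C}^\top\boldsymbol\phi_s'$. Moreover, there exist $\boldsymbol\theta_s'\in\mathbb{R}^N$ and $\mathbf{y}_s'\in\mathbb{R}^L$ with $\mathbf{C}\mathbf{y}_s'=0$ such that $\mathbf{v}_s'=\mathbf{B}\mathbf{C}^\top\boldsymbol\theta_s'+\mathbf{y}_s'$ and $\mathbf{B}\mathbf{C}^\top\boldsymbol\phi_s'=\mathbf{B}\mathbf{C}^\top\boldsymbol\theta_s'$. Finally, $(\mathbf{r}^{p\prime}_s,\boldsymbol\omega_s',\boldsymbol\theta_s',\boldsymbol\phi_s',\boldsymbol\pi_s^{p\prime},\underline{\boldsymbol\mu}_s',\bar{\boldsymbol\mu}_s')$ is an equilibrium point of the closed-loop dynamics described in the context if and only if $(\mathbf{r}^{p\prime}_s,\boldsymbol\omega_s',\mathbf{v}_s',\boldsymbol\phi_s',\boldsymbol\pi_s^{p\prime},\underline{\boldsymbol\mu}_s',\bar{\boldsymbol\mu}_s')$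 is a primal-dual optimal solution of $FR'$, where $\boldsymbol\omega_s'$, $\boldsymbol\pi_s^{p\prime}$ and $(\underline{\boldsymbol\mu}_s',\bar{\boldsymbol\mu}_s')$ are the Lagrange multipliers associated with constraints (b), (c) and (d) of $FR'$, respectively.
   Context: Network: connected directed graph with node set $N$ (also its cardinality) and link set $L$, incidence matrix $\mathbf{C}\in\mathbb{R}^{N\times L}$, $\mathbf{B}=\mathrm{diag}(B_l)$ with $B_l>0$, $\mathbf{L}=\mathbf{C}\mathbf{B}\mathbf{C}^\top$, $\mathbf{H}=\mathbf{B}\mathbf{C}^\top\mathbf{L}^\dagger$, line capacities $\mathbf{f}\in\mathbb{R}^L$, $\mathbf{1}$ the all-ones vector. At each node $n$ a regulation generator has capacity $[\underline{q}_n^p,\bar{q}_n^p]$ and strictly convex continuously differentiable cost $c_n^p$ of its total output; $c_n^{p\prime}$ is its derivative and $c_n^{p\prime-1}$ the inverse of the derivative. $\mathbf{D}=\mathrm{diag}(D_n)$ (damping, $D_n>0$), $\mathbf{M}=\mathrm{diag}(M_n)$ (inertia, $M_n>0$). $FR(\mathbf{q}^b,\mathbf{q}^p,\mathbf{d}_s)$: minimize $\sum_n c_n^p(q^p_n+r^p_{s,n})$ over $\mathbf{r}^p_s\in\mathbb{R}^N$ subject to $\underline{\mathbf{q}}^p\le\mathbf{q}^p+\mathbf{r}^p_s\le\bar{\mathbf{q}}^p$, $\mathbf{1}^\top(\mathbf{q}^b+\mathbf{q}^p+\mathbf{r}^p_s-\mathbf{d}_s)=0$, $-\mathbf{f}\le\mathbf{H}(\mathbf{q}^b+\mathbf{q}^p+\mathbf{r}^p_s-\mathbf{d}_s)\le\mathbf{f}$.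 $FR'(\mathbf{q}^b,\mathbf{q}^p,\mathbf{d}_s)$: minimize $\sum_n\big(c_n^p(q_n^p+r^p_{s,n})+D_n\omega_{s,n}^2/2\big)$ over $(\mathbf{r}^p_s,\boldsymbol\omega_s,\mathbf{v}_s,\boldsymbol\phi_s)\in\mathbb{R}^N\times\mathbb{R}^N\times\mathbb{R}^L\times\mathbb{R}^N$ subject to (b) $\mathbf{q}^b+\mathbf{q}^p+\mathbf{r}^p_s-\mathbf{d}_s-\mathbf{D}\boldsymbol\omega_s=\mathbf{C}\mathbf{v}_s$; (c) $\mathbf{q}^b+\mathbf{q}^p+\mathbf{r}^p_s-\mathbf{d}_s=\mathbf{L}\boldsymbol\phi_s$; (d) $-\mathbf{f}\le\mathbf{B}\mathbf{C}^\top\boldsymbol\phi_s\le\mathbf{f}$; (e) $\underline{\mathbf{q}}^p\le\mathbf{q}^p+\mathbf{r}^p_s\le\bar{\mathbf{q}}^p$. Closed-loop dynamics (time $t$, states $\boldsymbol\theta_s,\boldsymbol\omega_s,\boldsymbol\pi^p_s,\bar{\boldsymbol\mu}_s,\underline{\boldsymbol\mu}_s,\boldsymbol\phi_s$): $\dot{\boldsymbol\theta}_s=\boldsymbol\omega_s$; $\mathbf{M}\dot{\boldsymbol\omega}_s=\mathbf{q}^b+\mathbf{q}^p+\mathbf{r}^p_s(t)-\mathbf{d}_s-\mathbf{D}\boldsymbol\omega_s-\mathbf{L}\boldsymbol\theta_s$; $r^p_{s,n}(t)=\big[c_n^{p\prime-1}(-\omega_{s,n}(t)-\pi^p_{s,n}(t))-q^p_n\big]_{\underline{q}_n^p-q_n^p}^{\bar{q}_n^p-q_n^p}$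 where $[x]_a^b$ is the projection (clamp) of $x$ onto $[a,b]$; $\dot{\boldsymbol\pi}^p_s=\boldsymbol\zeta^\pi(\mathbf{q}^b+\mathbf{q}^p+\mathbf{r}^p_s(t)-\mathbf{d}_s-\mathbf{L}\boldsymbol\phi_s)$; $\dot{\bar{\boldsymbol\mu}}_s=\boldsymbol\zeta^{\bar\mu}[\mathbf{B}\mathbf{C}^\top\boldsymbol\phi_s-\mathbf{f}]^+_{\bar{\boldsymbol\mu}_s}$; $\dot{\underline{\boldsymbol\mu}}_s=\boldsymbol\zeta^{\underline\mu}[-\mathbf{f}-\mathbf{B}\mathbf{C}^\top\boldsymbol\phi_s]^+_{\underline{\boldsymbol\mu}_s}$; $\dot{\boldsymbol\phi}_s=\boldsymbol\chi^\phi(\mathbf{L}\boldsymbol\pi^p_s-\mathbf{C}\mathbf{B}(\bar{\boldsymbol\mu}_s-\underline{\boldsymbol\mu}_s))$. Here $\boldsymbol\zeta^\pi,\boldsymbol\chi^\phi\in\mathbb{R}^{N\times N}$ and $\boldsymbol\zeta^{\bar\mu},\boldsymbol\zeta^{\underline\mu}\in\mathbb{R}^{L\times L}$ are diagonal gain matrices, and $[\mathbf{y}]^+_{\mathbf{x}}$ is taken elementwise with $[y]^+_x=0$ if $x=0$ and $y<0$, and $[y]^+_x=y$ otherwise. *)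

theory Defs
  imports "HOL-Analysis.Analysis"
begin

definition diag_mat :: "real^'a \<Rightarrow> real^'a^'a" where
  "diag_mat v = (\<chi> i j. if i = j then v$i else 0)"

definition pinv :: "real^'m^'n \<Rightarrow> real^'n^'m" where
  "pinv A = (THE X. A ** X ** A = A \<and> X ** A ** X = X \<and>
                    transpose (A ** X) = A ** X \<and> transpose (X ** A) = X ** A)"

definition clamp :: "real \<Rightarrow> real \<Rightarrow> real \<Rightarrow> real" where
  "clamp a b x = max a (min b x)"

definition proj_plus :: "real^'a \<Rightarrow> real^'a \<Rightarrow> real^'a" where
  "proj_plus x y = (\<chi> i. if x$i = 0 \<and> y$i < 0 then 0 else y$i)"

definition strictly_convex :: "(real \<Rightarrow> real) \<Rightarrow> bool" where
  "strictly_convex g \<longleftrightarrow> (\<forall>x y t. x \<noteq> y \<and> 0 < t \<and> t < 1 \<longrightarrow>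
      g ((1 - t) * x + t * y) < (1 - t) * g x + t * g y)"

text \<open>Directed graph: links 'l, each link l goes from node src l to node dst l.\<close>
definition incidence :: "('l \<Rightarrow> 'n) \<Rightarrow> ('l \<Rightarrow> 'n) \<Rightarrow> real^'l^'n" where
  "incidence src dst = (\<chi> n l. if n = src l then 1 else if n = dst l then -1 else 0)"

definition graph_connected :: "('l \<Rightarrow> 'n) \<Rightarrow> ('l \<Rightarrow> 'n) \<Rightarrow> bool" where
  "graph_connected src dst \<longleftrightarrow>
     (\<forall>a b. (a, b) \<in> {(x, y). \<exists>l. (x = src l \<and> y = dst l) \<or> (x = dst l \<and> y = src l)}\<^sup>*)"

definition laplacian :: "('l \<Rightarrow> 'n) \<Rightarrow> ('l \<Rightarrow> 'n) \<Rightarrow> real^'l \<Rightarrow> real^'n^'n" where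
  "laplacian src dst B = incidence src dst ** diag_mat B ** transpose (incidence src dst)"

definition ptdf :: "('l \<Rightarrow> 'n) \<Rightarrow> ('l \<Rightarrow> 'n) \<Rightarrow> real^'l \<Rightarrow> real^'n^'l" where
  "ptdf src dst B = diag_mat B ** transpose (incidence src dst) ** pinv (laplacian src dst B)"

text \<open>B C^T (line flows from angles)\<close>
definition flowmat :: "('l \<Rightarrow> 'n) \<Rightarrow> ('l \<Rightarrow> 'n) \<Rightarrow> real^'l \<Rightarrow> real^'n^'l" where
  "flowmat src dst B = diag_mat B ** transpose (incidence src dst)"

definition FR_feasible ::
  "('l \<Rightarrow> 'n) \<Rightarrow> ('l \<Rightarrow> 'n) \<Rightarrow> real^'l \<Rightarrow> real^'l \<Rightarrow> real^'n \<Rightarrow> real^'n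
   \<Rightarrow> real^'n \<Rightarrow> real^'n \<Rightarrow> real^'n \<Rightarrow> real^'n \<Rightarrow> bool" where
  "FR_feasible src dst B f qlo qhi qb qp d r \<longleftrightarrow>
     (\<forall>n. qlo$n \<le> qp$n + r$n \<and> qp$n + r$n \<le> qhi$n) \<and>
     (\<Sum>n\<in>UNIV. (qb + qp + r - d)$n) = 0 \<and>
     (\<forall>l. - f$l \<le> (ptdf src dst B *v (qb + qp + r - d))$l \<and>
          (ptdf src dst B *v (qb + qp + r - d))$l \<le> f$l)"

definition gen_cost :: "('n \<Rightarrow> real \<Rightarrow> real) \<Rightarrow> real^'n \<Rightarrow> real^'n \<Rightarrow> real" where
  "gen_cost c qp r = (\<Sum>n\<in>UNIV. c n (qp$n + r$n))"

definition FR_optimal ::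
  "('n \<Rightarrow> real \<Rightarrow> real) \<Rightarrow> ('l \<Rightarrow> 'n) \<Rightarrow> ('l \<Rightarrow> 'n) \<Rightarrow> real^'l \<Rightarrow> real^'l \<Rightarrow> real^'n \<Rightarrow> real^'n
   \<Rightarrow> real^'n \<Rightarrow> real^'n \<Rightarrow> real^'n \<Rightarrow> real^'n \<Rightarrow> bool" where
  "FR_optimal c src dst B f qlo qhi qb qp d r \<longleftrightarrow>
     FR_feasible src dst B f qlo qhi qb qp d r \<and>
     (\<forall>r'. FR_feasible src dst B f qlo qhi qb qp d r' \<longrightarrow> gen_cost c qp r \<le> gen_cost c qp r')"

definition FRp_obj :: "('n \<Rightarrow> real \<Rightarrow> real) \<Rightarrow> real^'n \<Rightarrow> real^'n \<Rightarrow> real^'n \<Rightarrow> real^'n \<Rightarrow> real" where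
  "FRp_obj c D qp r \<omega> = (\<Sum>n\<in>UNIV. c n (qp$n + r$n) + D$n * (\<omega>$n)\<^sup>2 / 2)"

text \<open>Constraint (e) only\<close>
definition box_ok :: "real^'n \<Rightarrow> real^'n \<Rightarrow> real^'n \<Rightarrow> real^'n \<Rightarrow> bool" where
  "box_ok qlo qhi qp r \<longleftrightarrow> (\<forall>n. qlo$n \<le> qp$n + r$n \<and> qp$n + r$n \<le> qhi$n)"

definition FRp_feasible ::
  "('l \<Rightarrow> 'n) \<Rightarrow> ('l \<Rightarrow> 'n) \<Rightarrow> real^'l \<Rightarrow> real^'n \<Rightarrow> real^'l \<Rightarrow> real^'n \<Rightarrow> real^'n
   \<Rightarrow> real^'n \<Rightarrow> real^'n \<Rightarrow> real^'n
   \<Rightarrow> real^'n \<Rightarrow> real^'n \<Rightarrow> real^'l \<Rightarrow> real^'n \<Rightarrow> bool" where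
  "FRp_feasible src dst B D f qlo qhi qb qp d r \<omega> v \<phi> \<longleftrightarrow>
     qb + qp + r - d - diag_mat D *v \<omega> = incidence src dst *v v \<and>
     qb + qp + r - d = laplacian src dst B *v \<phi> \<and>
     (\<forall>l. - f$l \<le> (flowmat src dst B *v \<phi>)$l \<and> (flowmat src dst B *v \<phi>)$l \<le> f$l) \<and>
     box_ok qlo qhi qp r"

definition FRp_optimal ::
  "('n \<Rightarrow> real \<Rightarrow> real) \<Rightarrow> ('l \<Rightarrow> 'n) \<Rightarrow> ('l \<Rightarrow> 'n) \<Rightarrow> real^'l \<Rightarrow> real^'n \<Rightarrow> real^'l
   \<Rightarrow> real^'n \<Rightarrow> real^'n \<Rightarrow> real^'n \<Rightarrow> real^'n \<Rightarrow> real^'n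
   \<Rightarrow> real^'n \<Rightarrow> real^'n \<Rightarrow> real^'l \<Rightarrow> real^'n \<Rightarrow> bool" where
  "FRp_optimal c src dst B D f qlo qhi qb qp d r \<omega> v \<phi> \<longleftrightarrow>
     FRp_feasible src dst B D f qlo qhi qb qp d r \<omega> v \<phi> \<and>
     (\<forall>r' \<omega>' v' \<phi>'. FRp_feasible src dst B D f qlo qhi qb qp d r' \<omega>' v' \<phi>' \<longrightarrow>
        FRp_obj c D qp r \<omega> \<le> FRp_obj c D qp r' \<omega>')"

text \<open>Lagrangian of FR' dualizing (b) with multiplier lam, (c) with pi, and (d) with
  mubar (upper bound) and mulow (lower bound); constraint (e) is kept as the domain.\<close>
definition FRp_lagrangian ::
  "('n \<Rightarrow> real \<Rightarrow> real) \<Rightarrow> ('l \<Rightarrow> 'n) \<Rightarrow> ('l \<Rightarrow> 'n) \<Rightarrow> real^'l \<Rightarrow> real^'n \<Rightarrow> real^'l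
   \<Rightarrow> real^'n \<Rightarrow> real^'n \<Rightarrow> real^'n
   \<Rightarrow> real^'n \<Rightarrow> real^'n \<Rightarrow> real^'l \<Rightarrow> real^'n
   \<Rightarrow> real^'n \<Rightarrow> real^'n \<Rightarrow> real^'l \<Rightarrow> real^'l \<Rightarrow> real" where
  "FRp_lagrangian c src dst B D f qb qp d r \<omega> v \<phi> lam \<pi> mulow mubar =
     FRp_obj c D qp r \<omega>
     + lam \<bullet> (qb + qp + r - d - diag_mat D *v \<omega> - incidence src dst *v v)
     + \<pi> \<bullet> (qb + qp + r - d - laplacian src dst B *v \<phi>)
     + mubar \<bullet> (flowmat src dst B *v \<phi> - f)
     + mulow \<bullet> (- f - flowmat src dst B *v \<phi>)"

definition FRp_dual ::
  "('n \<Rightarrow> real \<Rightarrow> real) \<Rightarrow> ('l \<Rightarrow> 'n) \<Rightarrow> ('l \<Rightarrow> 'n) \<Rightarrow> real^'l \<Rightarrow> real^'n \<Rightarrow> real^'l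
   \<Rightarrow> real^'n \<Rightarrow> real^'n \<Rightarrow> real^'n \<Rightarrow> real^'n \<Rightarrow> real^'n
   \<Rightarrow> real^'n \<Rightarrow> real^'n \<Rightarrow> real^'l \<Rightarrow> real^'l \<Rightarrow> ereal" where
  "FRp_dual c src dst B D f qlo qhi qb qp d lam \<pi> mulow mubar =
     (INF x \<in> {(r, \<omega>, v, \<phi>). box_ok qlo qhi qp r}.
        ereal (case x of (r, \<omega>, v, \<phi>) \<Rightarrow>
          FRp_lagrangian c src dst B D f qb qp d r \<omega> v \<phi> lam \<pi> mulow mubar))"

definition dual_feasible :: "real^'l \<Rightarrow> real^'l \<Rightarrow> bool" where
  "dual_feasible mulow mubar \<longleftrightarrow> (\<forall>l. 0 \<le> mulow$l \<and> 0 \<le> mubar$l)"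

text \<open>Primal-dual optimal solution of FR': (r, omega, v, phi) primal optimal and
  (omega, pi, mulow, mubar) dual optimal, omega being the multiplier of (b).\<close>
definition FRp_primal_dual_optimal ::
  "('n \<Rightarrow> real \<Rightarrow> real) \<Rightarrow> ('l \<Rightarrow> 'n) \<Rightarrow> ('l \<Rightarrow> 'n) \<Rightarrow> real^'l \<Rightarrow> real^'n \<Rightarrow> real^'l
   \<Rightarrow> real^'n \<Rightarrow> real^'n \<Rightarrow> real^'n \<Rightarrow> real^'n \<Rightarrow> real^'n
   \<Rightarrow> real^'n \<Rightarrow> real^'n \<Rightarrow> real^'l \<Rightarrow> real^'n
   \<Rightarrow> real^'n \<Rightarrow> real^'l \<Rightarrow> real^'l \<Rightarrow> bool" where
  "FRp_primal_dual_optimal c src dst B D f qlo qhi qb qp d r \<omega> v \<phi> \<pi> mulow mubar \<longleftrightarrow>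
     FRp_optimal c src dst B D f qlo qhi qb qp d r \<omega> v \<phi> \<and>
     dual_feasible mulow mubar \<and>
     (\<forall>lam' \<pi>' mulow' mubar'. dual_feasible mulow' mubar' \<longrightarrow>
        FRp_dual c src dst B D f qlo qhi qb qp d lam' \<pi>' mulow' mubar'
          \<le> FRp_dual c src dst B D f qlo qhi qb qp d \<omega> \<pi> mulow mubar)"

definition control_law ::
  "('n \<Rightarrow> real \<Rightarrow> real) \<Rightarrow> real^'n \<Rightarrow> real^'n \<Rightarrow> real^'n \<Rightarrow> real^'n \<Rightarrow> real^'n \<Rightarrow> real^'n" where
  "control_law c qlo qhi qp \<omega> \<pi> =
     (\<chi> n. clamp (qlo$n - qp$n) (qhi$n - qp$n)
                  (inv (deriv (c n)) (- \<omega>$n - \<pi>$n) - qp$n))"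

text \<open>Equilibrium: r equals the control law, every time derivative of the closed loop vanishes,
  and the multiplier states lie in their (nonnegative) state space.\<close>
definition cl_equilibrium ::
  "('n \<Rightarrow> real \<Rightarrow> real) \<Rightarrow> ('l \<Rightarrow> 'n) \<Rightarrow> ('l \<Rightarrow> 'n) \<Rightarrow> real^'l \<Rightarrow> real^'n \<Rightarrow> real^'n \<Rightarrow> real^'l
   \<Rightarrow> real^'n \<Rightarrow> real^'n
   \<Rightarrow> real^'n \<Rightarrow> real^'n \<Rightarrow> real^'l \<Rightarrow> real^'l
   \<Rightarrow> real^'n \<Rightarrow> real^'n \<Rightarrow> real^'n
   \<Rightarrow> real^'n \<Rightarrow> real^'n \<Rightarrow> real^'n \<Rightarrow> real^'n \<Rightarrow> real^'n \<Rightarrow> real^'l \<Rightarrow> real^'l \<Rightarrow> bool" where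
  "cl_equilibrium c src dst B D M f qlo qhi zeta_pi chi_phi zeta_mubar zeta_mulow qb qp d
       r \<omega> \<theta> \<phi> \<pi> mulow mubar \<longleftrightarrow>
     r = control_law c qlo qhi qp \<omega> \<pi> \<and>
     dual_feasible mulow mubar \<and>
     \<omega> = 0 \<and>
     (\<chi> n. (qb + qp + r - d - diag_mat D *v \<omega> - laplacian src dst B *v \<theta>)$n / M$n) = 0 \<and>
     diag_mat zeta_pi *v (qb + qp + r - d - laplacian src dst B *v \<phi>) = 0 \<and>
     diag_mat zeta_mubar *v proj_plus mubar (flowmat src dst B *v \<phi> - f) = 0 \<and>
     diag_mat zeta_mulow *v proj_plus mulow (- f - flowmat src dst B *v \<phi>) = 0 \<and>
     diag_mat chi_phi *v (laplacian src dst B *v \<pi>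
        - (incidence src dst ** diag_mat B) *v (mubar - mulow)) = 0"

end

theory Submission imports Defs begin

lemma diag_mat_mult: "diag_mat v *v x = (\<chi> i. v$i * x$i)"
proof -
  have "(\<Sum>j\<in>UNIV. (if i = j then v$i else 0) * x$j) = v$i * x$i" for i
  proof -
    have "(\<Sum>j\<in>UNIV. (if i = j then v$i else 0) * x$j) = (\<Sum>j\<in>UNIV. if j = i then v$i * x$i else 0)"
      by (rule sum.cong) auto
    then show ?thesis by simp
  qed
  then show ?thesis by (simp add: diag_mat_def matrix_vector_mult_def vec_eq_iff)
qed

lemma transpose_diag: "transpose (diag_mat v) = diag_mat v"
  by (simp add: diag_mat_def transpose_def vec_eq_iff)

lemma incT_apply:
  assumes "src l \<noteq> dst l"
  shows "(transpose (incidence src dst) *v x) $ l = x$(src l) - x$(dst l)"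
proof -
  have "(transpose (incidence src dst) *v x) $ l
      = (\<Sum>n\<in>UNIV. (if n = src l then x$n else 0) + (if n = dst l then - x$n else 0))"
    unfolding matrix_vector_mult_def transpose_def incidence_def using assms
    by (auto intro!: sum.cong)
  also have "\<dots> = x$(src l) - x$(dst l)"
    by (simp add: sum.distrib)
  finally show ?thesis .
qed

lemma incT_apply':
  assumes "src l \<noteq> dst l"
  shows "(x v* incidence src dst) $ l = x$(src l) - x$(dst l)"
  using incT_apply[of src l dst x, OF assms] by simp

lemma inner_mat: "(A *v y) \<bullet> x = y \<bullet> (transpose A *v (x::real^'n))"
proof -
  have "(A *v y) \<bullet> x = (\<Sum>i\<in>UNIV. \<Sum>j\<in>UNIV. A$i$j * y$j * x$i)"
    by (simp add: inner_vec_def matrix_vector_mult_def sum_distrib_right)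
  also have "\<dots> = (\<Sum>j\<in>UNIV. \<Sum>i\<in>UNIV. A$i$j * y$j * x$i)"
    by (rule sum.swap)
  also have "\<dots> = y \<bullet> (transpose A *v x)"
    unfolding inner_vec_def matrix_vector_mult_def transpose_def
    by (simp add: sum_distrib_left mult_ac)
  finally show ?thesis .
qed

lemma sum_inc:
  assumes "\<forall>l. src l \<noteq> dst l"
  shows "(\<Sum>n\<in>UNIV. (incidence src dst *v y) $ n) = 0"
proof -
  have "(\<Sum>n\<in>UNIV. (incidence src dst *v y) $ n) = (incidence src dst *v y) \<bullet> (\<chi> n. 1)"
    by (simp add: inner_vec_def)
  also have "\<dots> = y \<bullet> (transpose (incidence src dst) *v (\<chi> n. 1))"
    by (rule inner_mat)
  also have "transpose (incidence src dst) *v (\<chi> n. 1) = 0"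
    using assms by (simp add: vec_eq_iff incT_apply incT_apply')
  finally show ?thesis by simp
qed

lemma flow_const:
  assumes "\<forall>l. src l \<noteq> dst l"
  shows "flowmat src dst B *v (\<chi> n. a) = 0"
  using assms by (simp add: flowmat_def matrix_vector_mul_assoc[symmetric] diag_mat_mult vec_eq_iff incT_apply incT_apply')

lemma lap_mult: "laplacian src dst B *v x = incidence src dst *v (flowmat src dst B *v x)"
  by (simp add: laplacian_def flowmat_def matrix_vector_mul_assoc matrix_mul_assoc)

lemma lap_sym: "transpose (laplacian src dst B) = laplacian src dst B"
  by (simp add: laplacian_def matrix_transpose_mul transpose_diag matrix_mul_assoc)

lemma lap_quad:
  "x \<bullet> (laplacian src dst B *v x) = (\<Sum>l\<in>UNIV. B$l * ((transpose (incidence src dst) *v x)$l)^2)"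
proof -
  have "x \<bullet> (laplacian src dst B *v x) = (incidence src dst *v (diag_mat B *v (transpose (incidence src dst) *v x))) \<bullet> x"
    by (simp only: lap_mult flowmat_def matrix_vector_mul_assoc[symmetric] inner_commute)
  also have "\<dots> = (diag_mat B *v (transpose (incidence src dst) *v x)) \<bullet> (transpose (incidence src dst) *v x)"
    by (rule inner_mat)
  finally show ?thesis by (simp add: diag_mat_mult inner_vec_def power2_eq_square mult.assoc)
qed

lemma connected_const:
  assumes "graph_connected src dst" "\<forall>l. x$(src l) = x$(dst l)"
  shows "x$a = x$b"
proof -
  have "(a, b) \<in> {(x, y). \<exists>l. (x = src l \<and> y = dst l) \<or> (x = dst l \<and> y = src l)}\<^sup>*"
    using assms(1) unfolding graph_connected_def by blast
  then show ?thesis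
    by (induction rule: rtrancl_induct) (use assms(2) in auto)
qed

lemma penrose_unique:
  fixes A :: "real^'m^'n"
  assumes X: "A ** X ** A = A" "X ** A ** X = X" "transpose (A ** X) = A ** X" "transpose (X ** A) = X ** A"
      and Y: "A ** Y ** A = A" "Y ** A ** Y = Y" "transpose (A ** Y) = A ** Y" "transpose (Y ** A) = Y ** A"
  shows "X = Y"
proof -
  have tA: "transpose A = transpose A ** transpose Y ** transpose A"
    by (metis Y(1) matrix_transpose_mul matrix_mul_assoc)
  have tA': "transpose A = transpose A ** transpose X ** transpose A"
    by (metis X(1) matrix_transpose_mul matrix_mul_assoc)
  have "X = X ** (A ** X)" using X(2) by (simp add: matrix_mul_assoc)
  also have "\<dots> = X ** (transpose X ** transpose A)" using X(3) by (simp add: matrix_transpose_mul)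
  also have "\<dots> = X ** (transpose X ** (transpose A ** transpose Y ** transpose A))" using tA by simp
  also have "\<dots> = X ** transpose (A ** X) ** transpose (A ** Y)"
    by (simp add: matrix_transpose_mul matrix_mul_assoc)
  also have "\<dots> = X ** A ** X ** A ** Y" using X(3) Y(3) by (simp add: matrix_mul_assoc)
  also have "\<dots> = X ** A ** Y" using X(2) by simp
  finally have 1: "X = X ** A ** Y" .
  have "Y = (Y ** A) ** Y" using Y(2) by simp
  also have "\<dots> = transpose A ** transpose Y ** Y" using Y(4) by (metis matrix_transpose_mul)
  also have "\<dots> = (transpose A ** transpose X ** transpose A) ** transpose Y ** Y" using tA' by simp
  also have "\<dots> = transpose (X ** A) ** transpose (Y ** A) ** Y"
    by (simp add: matrix_transpose_mul matrix_mul_assoc)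
  also have "\<dots> = X ** A ** (Y ** A ** Y)" using X(4) Y(4) by (simp add: matrix_mul_assoc)
  also have "\<dots> = X ** A ** Y" using Y(2) by simp
  finally show ?thesis using 1 by simp
qed

lemma mat_sub_ldistrib: "(A::real^'m^'n) ** (B - C) = A ** B - A ** C"
  by (simp add: vec_eq_iff matrix_matrix_mult_def sum_subtractf algebra_simps)
lemma mat_sub_rdistrib: "((B::real^'m^'n) - C) ** A = B ** A - C ** A"
  by (simp add: vec_eq_iff matrix_matrix_mult_def sum_subtractf algebra_simps)
lemma mat_add_rdistrib: "((B::real^'m^'n) + C) ** A = B ** A + C ** A"
  by (simp add: vec_eq_iff matrix_matrix_mult_def sum.distrib algebra_simps)
lemma transpose_sub: "transpose ((A::real^'m^'n) - B) = transpose A - transpose B"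
  by (simp add: vec_eq_iff transpose_def)

definition Jn :: "real^'n^'n" where "Jn = (\<chi> i j. 1 / real CARD('n))"

lemma Jn_mult: "(Jn::real^'n^'n) *v x = (\<chi> i. (\<Sum>j\<in>UNIV. x$j) / real CARD('n))"
  by (simp add: Jn_def matrix_vector_mult_def vec_eq_iff sum_divide_distrib)

lemma transpose_Jn: "transpose (Jn::real^'n^'n) = Jn"
  by (simp add: Jn_def transpose_def vec_eq_iff)

lemma Jn_Jn: "(Jn::real^'n^'n) ** Jn = Jn"
  by (simp add: Jn_def matrix_matrix_mult_def vec_eq_iff power2_eq_square)

lemma lap_Jn:
  assumes "\<forall>l. src l \<noteq> dst l"
  shows "laplacian src dst B ** Jn = 0"
proof -
  have "laplacian src dst B *v (\<chi> k. 1 / real CARD('n)) = 0"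
    using assms by (simp add: lap_mult flow_const)
  then have "\<forall>i. (\<Sum>k\<in>UNIV. laplacian src dst B $ i $ k * (1 / real CARD('n))) = 0"
    by (simp add: vec_eq_iff matrix_vector_mult_def)
  then show ?thesis
    by (simp add: Jn_def matrix_matrix_mult_def vec_eq_iff)
qed

lemma Jn_lap:
  assumes "\<forall>l. src l \<noteq> dst l"
  shows "Jn ** laplacian src dst B = 0"
proof -
  have "Jn ** laplacian src dst B = transpose (laplacian src dst B ** Jn)"
    by (simp add: matrix_transpose_mul lap_sym transpose_Jn)
  then show ?thesis using lap_Jn[OF assms] by (simp add: vec_eq_iff transpose_def)
qed

lemma lapJ_inj:
  fixes src dst :: "'l::finite \<Rightarrow> 'n::finite" and x :: "real^'n"
  assumes "\<forall>l. src l \<noteq> dst l" "graph_connected src dst" "\<forall>l. 0 < B$l"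
    and "(laplacian src dst B + Jn) *v x = 0"
  shows "x = 0"
proof -
  let ?t = "transpose (incidence src dst) *v x"
  have "0 = x \<bullet> ((laplacian src dst B + Jn) *v x)" using assms(4) by simp
  also have "\<dots> = (\<Sum>l\<in>UNIV. B$l * (?t$l)^2) + (\<Sum>j\<in>UNIV. x$j)^2 / real CARD('n)"
  proof -
    have "x \<bullet> ((laplacian src dst B + Jn) *v x) = x \<bullet> (laplacian src dst B *v x) + x \<bullet> (Jn *v x)"
      by (simp only: matrix_vector_mult_add_rdistrib inner_add_right)
    moreover have "x \<bullet> (Jn *v x) = (\<Sum>j\<in>UNIV. x$j)^2 / real CARD('n)"
      by (simp add: Jn_mult inner_vec_def power2_eq_square sum_distrib_left sum_divide_distrib[symmetric] mult.commute)
    ultimately show ?thesis by (simp only: lap_quad)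
  qed
  finally have e: "(\<Sum>l\<in>UNIV. B$l * (?t$l)^2) + (\<Sum>j\<in>UNIV. x$j)^2 / real CARD('n) = 0" by simp
  have n1: "(\<Sum>l\<in>UNIV. B$l * (?t$l)^2) \<ge> 0"
    using assms(3) by (intro sum_nonneg) (simp add: less_imp_le)
  have n2: "(\<Sum>j\<in>UNIV. x$j)^2 / real CARD('n) \<ge> 0" by simp
  have s1: "(\<Sum>l\<in>UNIV. B$l * (?t$l)^2) = 0" and s2: "(\<Sum>j\<in>UNIV. x$j)^2 / real CARD('n) = 0"
    using e n1 n2 by linarith+
  have "\<forall>l. B$l * (?t$l)^2 = 0"
    using s1 sum_nonneg_eq_0_iff[of UNIV "\<lambda>l. B$l * (?t$l)^2"] assms(3)
    by (simp add: less_imp_le)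
  then have t0: "?t$l = 0" for l using assms(3) by (metis less_irrefl mult_eq_0_iff power_eq_0_iff)
  have "x$(src l) = x$(dst l)" for l using t0[of l] incT_apply[of src l dst x] assms(1) by simp
  then have "\<forall>l. x$(src l) = x$(dst l)" by blast
  then have const: "\<And>a b. x$a = x$b" using connected_const[OF assms(2)] by blast
  obtain a :: 'n where True by blast
  have "(\<Sum>j\<in>UNIV. x$j) = 0" using s2 by simp
  moreover have "(\<Sum>j\<in>UNIV. x$j) = (\<Sum>j\<in>(UNIV::'n set). x$a)" using const by (intro sum.cong) auto
  ultimately have xa: "x$a = 0" by simp
  show ?thesis unfolding vec_eq_iff using const xa by (metis zero_index)
qed

lemma pinv_lap:
  fixes src dst :: "'l::finite \<Rightarrow> 'n::finite"
  assumes "\<forall>l. src l \<noteq> dst l" "graph_connected src dst" "\<forall>l. 0 < B$l"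
  shows "laplacian src dst B ** pinv (laplacian src dst B) = mat 1 - Jn \<and>
         pinv (laplacian src dst B) ** laplacian src dst B = mat 1 - Jn"
proof -
  define L where "L = laplacian src dst B"
  define A where "A = L + Jn"
  have "\<forall>x. A *v x = 0 \<longrightarrow> x = 0" using lapJ_inj[OF assms] unfolding A_def L_def by blast
  then obtain Ai where AiA: "Ai ** A = mat 1" using matrix_left_invertible_ker by blast
  then have AAi: "A ** Ai = mat 1" using matrix_left_right_inverse by blast
  have LJ: "L ** Jn = 0" and JL: "Jn ** L = 0" using lap_Jn[OF assms(1)] Jn_lap[OF assms(1)] L_def by auto
  have AJ: "A ** Jn = Jn" unfolding A_def by (simp add: mat_add_rdistrib LJ Jn_Jn)
  have JA: "Jn ** A = Jn" unfolding A_def by (simp add: matrix_add_ldistrib JL Jn_Jn)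
  have AiJ: "Ai ** Jn = Jn" by (metis AJ AiA matrix_mul_assoc matrix_mul_lid)
  have JAi: "Jn ** Ai = Jn" by (metis JA AAi matrix_mul_assoc matrix_mul_rid)
  have LA: "L = A - Jn" unfolding A_def by simp
  define X where "X = Ai - Jn"
  have LX: "L ** X = mat 1 - Jn"
    unfolding X_def by (simp add: mat_sub_ldistrib LJ) (simp add: LA mat_sub_rdistrib AAi JAi)
  have XL: "X ** L = mat 1 - Jn"
    unfolding X_def by (simp add: mat_sub_rdistrib JL) (simp add: LA mat_sub_ldistrib AiA AiJ)
  have P1: "L ** X ** L = L" by (simp add: LX mat_sub_rdistrib JL)
  have P2: "X ** L ** X = X" by (simp add: XL mat_sub_rdistrib) (simp add: X_def mat_sub_ldistrib JAi Jn_Jn)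
  have tI: "transpose (mat 1 - Jn) = (mat 1 - Jn :: real^'n^'n)" by (simp add: transpose_sub transpose_Jn)
  have "pinv L = X"
    unfolding pinv_def
  proof (rule the_equality)
    show "L ** X ** L = L \<and> X ** L ** X = X \<and> transpose (L ** X) = L ** X \<and> transpose (X ** L) = X ** L"
      using P1 P2 LX XL tI by simp
    fix Y assume "L ** Y ** L = L \<and> Y ** L ** Y = Y \<and> transpose (L ** Y) = L ** Y \<and> transpose (Y ** L) = Y ** L"
    then show "Y = X" using penrose_unique[of L Y X] P1 P2 LX XL tI by simp
  qed
  then show ?thesis using LX XL L_def by simp
qed

lemma mat1_Jn_mult: "(mat 1 - (Jn::real^'n^'n)) *v x = x - (\<chi> i. (\<Sum>j\<in>UNIV. x$j) / real CARD('n))"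
  by (simp add: matrix_vector_mult_diff_rdistrib Jn_mult)

locale net =
  fixes src dst :: "'l::finite \<Rightarrow> 'n::finite" and B :: "real^'l"
  assumes no_loops: "\<forall>l. src l \<noteq> dst l" and conn: "graph_connected src dst" and Bpos: "\<forall>l. 0 < B$l"
begin

abbreviation "L \<equiv> laplacian src dst B"
abbreviation "F \<equiv> flowmat src dst B"

lemma L_pinv_apply:
  assumes "(\<Sum>j\<in>UNIV. p$j) = 0"
  shows "L *v (pinv L *v p) = p"
proof -
  have "L *v (pinv L *v p) = (mat 1 - Jn) *v p"
    using pinv_lap[OF no_loops conn Bpos] by (simp add: matrix_vector_mul_assoc)
  also have "\<dots> = p" using assms by (simp add: mat1_Jn_mult vec_eq_iff)
  finally show ?thesis .
qed

lemma F_pinv_L: "F *v (pinv L *v (L *v \<phi>)) = F *v \<phi>"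
proof -
  have "pinv L *v (L *v \<phi>) = \<phi> - (\<chi> i. (\<Sum>j\<in>UNIV. \<phi>$j) / real CARD('n))"
    using pinv_lap[OF no_loops conn Bpos] by (simp add: matrix_vector_mul_assoc mat1_Jn_mult)
  then show ?thesis using flow_const[OF no_loops] by (simp add: matrix_vector_mult_diff_distrib)
qed

lemma ptdf_apply: "ptdf src dst B *v p = F *v (pinv L *v p)"
  by (simp add: ptdf_def flowmat_def matrix_vector_mul_assoc)

lemma sum_L: "(\<Sum>j\<in>UNIV. (L *v \<phi>)$j) = 0"
  using sum_inc[OF no_loops] by (simp add: lap_mult)

lemma FRp_imp_FR:
  assumes "FRp_feasible src dst B D f qlo qhi qb qp d r \<omega> v \<phi>"
  shows "FR_feasible src dst B f qlo qhi qb qp d r \<and> ptdf src dst B *v (qb + qp + r - d) = F *v \<phi>"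
proof -
  have p: "qb + qp + r - d = L *v \<phi>" using assms unfolding FRp_feasible_def by blast
  have pt: "ptdf src dst B *v (qb + qp + r - d) = F *v \<phi>" using p by (simp add: ptdf_apply F_pinv_L)
  have box: "box_ok qlo qhi qp r" using assms unfolding FRp_feasible_def by blast
  have sm: "(\<Sum>n\<in>UNIV. (qb + qp + r - d)$n) = 0" by (simp only: p sum_L)
  have fl: "\<forall>l. - f$l \<le> (F *v \<phi>)$l \<and> (F *v \<phi>)$l \<le> f$l" using assms unfolding FRp_feasible_def by blast
  show ?thesis unfolding FR_feasible_def pt using box sm fl unfolding box_ok_def by blast
qed

lemma FR_imp_FRp:
  assumes "FR_feasible src dst B f qlo qhi qb qp d r"
  defines "\<phi> \<equiv> pinv L *v (qb + qp + r - d)"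
  shows "FRp_feasible src dst B D f qlo qhi qb qp d r 0 (F *v \<phi>) \<phi>"
proof -
  have s: "(\<Sum>j\<in>UNIV. (qb + qp + r - d)$j) = 0" using assms unfolding FR_feasible_def by blast
  have p: "qb + qp + r - d = L *v \<phi>" using L_pinv_apply[OF s] \<phi>_def by simp
  have box: "box_ok qlo qhi qp r" using assms unfolding FR_feasible_def box_ok_def by blast
  have fl: "\<forall>l. - f$l \<le> (F *v \<phi>)$l \<and> (F *v \<phi>)$l \<le> f$l"
    using assms unfolding FR_feasible_def \<phi>_def ptdf_apply by blast
  have b: "qb + qp + r - d - diag_mat D *v 0 = incidence src dst *v (F *v \<phi>)"
    using p by (simp add: lap_mult)
  show ?thesis unfolding FRp_feasible_def using box fl b p by blast
qed

end
lemma FRp_obj_split: "FRp_obj c D qp r \<omega> = gen_cost c qp r + (\<Sum>n\<in>UNIV. D$n * (\<omega>$n)\<^sup>2 / 2)"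
  by (simp add: FRp_obj_def gen_cost_def sum.distrib)

lemma FR_convex:
  assumes "FR_feasible src dst B f qlo qhi qb qp d r" "FR_feasible src dst B f qlo qhi qb qp d r'"
  shows "FR_feasible src dst B f qlo qhi qb qp d ((1/2) *\<^sub>R (r + r'))"
proof -
  let ?H = "ptdf src dst B"
  define p1 where "p1 = qb + qp + r - d"
  define p2 where "p2 = qb + qp + r' - d"
  have e: "qb + qp + (1/2) *\<^sub>R (r + r') - d = (1/2) *\<^sub>R (p1 + p2)"
    unfolding p1_def p2_def by (simp add: vec_eq_iff field_simps)
  have He: "?H *v ((1/2) *\<^sub>R (p1 + p2)) = (1/2) *\<^sub>R (?H *v p1 + ?H *v p2)"
    by (simp only: matrix_vector_mult_scaleR matrix_vector_right_distrib)
  have s1: "(\<Sum>n\<in>UNIV. p1$n) = 0" "(\<Sum>n\<in>UNIV. p2$n) = 0"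
    using assms unfolding FR_feasible_def p1_def p2_def by auto
  have sm: "(\<Sum>n\<in>UNIV. ((1/2) *\<^sub>R (p1 + p2))$n) = (1/2) * ((\<Sum>n\<in>UNIV. p1$n) + (\<Sum>n\<in>UNIV. p2$n))"
    by (simp add: sum.distrib sum_divide_distrib[symmetric])
  have f1: "\<forall>l. - f$l \<le> (?H *v p1)$l \<and> (?H *v p1)$l \<le> f$l"
   and f2: "\<forall>l. - f$l \<le> (?H *v p2)$l \<and> (?H *v p2)$l \<le> f$l"
    using assms unfolding FR_feasible_def p1_def p2_def by auto
  have fl: "\<forall>l. - f$l \<le> (?H *v ((1/2) *\<^sub>R (p1 + p2)))$l \<and> (?H *v ((1/2) *\<^sub>R (p1 + p2)))$l \<le> f$l"
  proof
    fix l
    have "- f$l \<le> (?H *v p1)$l" "(?H *v p1)$l \<le> f$l" "- f$l \<le> (?H *v p2)$l" "(?H *v p2)$l \<le> f$l"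
      using f1 f2 by auto
    then show "- f$l \<le> (?H *v ((1/2) *\<^sub>R (p1 + p2)))$l \<and> (?H *v ((1/2) *\<^sub>R (p1 + p2)))$l \<le> f$l"
      unfolding He by simp
  qed
  have bx: "\<forall>n. qlo$n \<le> qp$n + ((1/2) *\<^sub>R (r + r'))$n \<and> qp$n + ((1/2) *\<^sub>R (r + r'))$n \<le> qhi$n"
  proof
    fix n
    have "\<forall>n. qlo$n \<le> qp$n + r$n \<and> qp$n + r$n \<le> qhi$n" "\<forall>n. qlo$n \<le> qp$n + r'$n \<and> qp$n + r'$n \<le> qhi$n"
      using assms unfolding FR_feasible_def by blast+
    then have "qlo$n \<le> qp$n + r$n" "qp$n + r$n \<le> qhi$n" "qlo$n \<le> qp$n + r'$n" "qp$n + r'$n \<le> qhi$n" by auto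
    then show "qlo$n \<le> qp$n + ((1/2) *\<^sub>R (r + r'))$n \<and> qp$n + ((1/2) *\<^sub>R (r + r'))$n \<le> qhi$n" by (simp add: field_simps)
  qed
  show ?thesis unfolding FR_feasible_def e using bx fl sm s1 by simp
qed

lemma strict_convex_mid:
  assumes "strictly_convex g" "x \<noteq> y"
  shows "g ((x + y)/2) < (g x + g y)/2"
proof -
  have 1: "g ((1 - 1/2) * x + (1/2) * y) < (1 - 1/2) * g x + (1/2) * g y"
    using assms unfolding strictly_convex_def by (metis field_sum_of_halves half_gt_zero_iff less_add_same_cancel2 zero_less_one)
  have 2: "(1 - 1/2) * x + (1/2) * y = (x + y)/2" by simp
  have 3: "(1 - 1/2) * g x + (1/2) * g y = (g x + g y)/2" by simp
  show ?thesis using 1 unfolding 2 3 .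
qed

context net begin

lemma part1:
  assumes D_pos: "\<forall>n. 0 < D$n"
    and cvx: "\<forall>n. strictly_convex (c n)"
    and FR_opt: "FR_optimal c src dst B f qlo qhi qb qp d r"
    and FRp_opt: "FRp_optimal c src dst B D f qlo qhi qb qp d r' \<omega>' v' \<phi>'"
  shows "\<omega>' = 0 \<and> r = r' \<and> ptdf src dst B *v (qb + qp + r - d) = F *v \<phi>' \<and>
         incidence src dst *v (v' - F *v \<phi>') = 0"
proof -
  have feas': "FRp_feasible src dst B D f qlo qhi qb qp d r' \<omega>' v' \<phi>'"
    using FRp_opt unfolding FRp_optimal_def by blast
  have p': "qb + qp + r' - d = L *v \<phi>'" using feas' unfolding FRp_feasible_def by blast
  have feas0: "FRp_feasible src dst B D f qlo qhi qb qp d r' 0 (F *v \<phi>') \<phi>'"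
    using feas' p' unfolding FRp_feasible_def by (simp add: lap_mult)
  have "FRp_obj c D qp r' \<omega>' \<le> FRp_obj c D qp r' 0"
    using FRp_opt feas0 unfolding FRp_optimal_def by blast
  then have sle: "(\<Sum>n\<in>UNIV. D$n * (\<omega>'$n)\<^sup>2 / 2) \<le> 0" by (simp add: FRp_obj_split)
  have nn: "\<forall>n\<in>UNIV. 0 \<le> D$n * (\<omega>'$n)\<^sup>2 / 2" using D_pos by (simp add: less_imp_le)
  have "(\<Sum>n\<in>UNIV. D$n * (\<omega>'$n)\<^sup>2 / 2) = 0" using sle sum_nonneg[of UNIV "\<lambda>n. D$n * (\<omega>'$n)\<^sup>2 / 2"] nn by auto
  moreover have "(\<Sum>n\<in>UNIV. D$n * (\<omega>'$n)\<^sup>2 / 2) = 0 \<longleftrightarrow> (\<forall>n\<in>UNIV. D$n * (\<omega>'$n)\<^sup>2 / 2 = 0)"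
    by (rule sum_nonneg_eq_0_iff) (use nn in auto)
  ultimately have "\<forall>n. D$n * (\<omega>'$n)\<^sup>2 / 2 = 0" by blast
  then have w0: "\<omega>' = 0" using D_pos by (simp add: vec_eq_iff) (metis less_irrefl)
  have FRr': "FR_feasible src dst B f qlo qhi qb qp d r'" and pt: "ptdf src dst B *v (qb + qp + r' - d) = F *v \<phi>'"
    using FRp_imp_FR[OF feas'] by auto
  have c1: "gen_cost c qp r \<le> gen_cost c qp r'" using FR_opt FRr' unfolding FR_optimal_def by blast
  have FRr: "FR_feasible src dst B f qlo qhi qb qp d r" using FR_opt unfolding FR_optimal_def by blast
  have "FRp_obj c D qp r' \<omega>' \<le> FRp_obj c D qp r 0"
    using FRp_opt FR_imp_FRp[OF FRr, of D] unfolding FRp_optimal_def by blast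
  then have c2: "gen_cost c qp r' \<le> gen_cost c qp r" using w0 by (simp add: FRp_obj_split)
  have req: "r = r'"
  proof (rule ccontr)
    assume ne: "r \<noteq> r'"
    define m where "m = (1/2) *\<^sub>R (r + r')"
    have FRm: "FR_feasible src dst B f qlo qhi qb qp d m" unfolding m_def by (rule FR_convex[OF FRr FRr'])
    then have c3: "gen_cost c qp r \<le> gen_cost c qp m" using FR_opt unfolding FR_optimal_def by blast
    have le: "c n (qp$n + m$n) \<le> (c n (qp$n + r$n) + c n (qp$n + r'$n)) / 2" for n
    proof (cases "r$n = r'$n")
      case True then show ?thesis by (simp add: m_def)
    next
      case False
      then have st: "c n (((qp$n + r$n) + (qp$n + r'$n))/2) < (c n (qp$n + r$n) + c n (qp$n + r'$n)) / 2"
        using strict_convex_mid[OF cvx[rule_format, of n], of "qp$n + r$n" "qp$n + r'$n"] False by simp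
      have e: "qp$n + m$n = ((qp$n + r$n) + (qp$n + r'$n))/2" by (simp add: m_def field_simps)
      show ?thesis unfolding e using st by (rule less_imp_le)
    qed
    obtain n0 where n0: "r$n0 \<noteq> r'$n0" using ne by (auto simp: vec_eq_iff)
    have lt: "c n0 (qp$n0 + m$n0) < (c n0 (qp$n0 + r$n0) + c n0 (qp$n0 + r'$n0)) / 2"
    proof -
      have st: "c n0 (((qp$n0 + r$n0) + (qp$n0 + r'$n0))/2) < (c n0 (qp$n0 + r$n0) + c n0 (qp$n0 + r'$n0)) / 2"
        using strict_convex_mid[OF cvx[rule_format, of n0], of "qp$n0 + r$n0" "qp$n0 + r'$n0"] n0 by simp
      have e: "qp$n0 + m$n0 = ((qp$n0 + r$n0) + (qp$n0 + r'$n0))/2" by (simp add: m_def field_simps)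
      show ?thesis unfolding e using st .
    qed
    have "gen_cost c qp m < (\<Sum>n\<in>UNIV. (c n (qp$n + r$n) + c n (qp$n + r'$n)) / 2)"
      unfolding gen_cost_def by (rule sum_strict_mono_ex1) (use le lt in auto)
    also have "\<dots> = (gen_cost c qp r + gen_cost c qp r') / 2"
      unfolding gen_cost_def by (simp add: sum.distrib sum_divide_distrib[symmetric])
    finally have "gen_cost c qp m < (gen_cost c qp r + gen_cost c qp r') / 2" .
    then have A: "gen_cost c qp m < (gen_cost c qp r + gen_cost c qp r') / 2" .
    have B: "gen_cost c qp r \<le> gen_cost c qp m" by (rule c3)
    have C: "gen_cost c qp r' \<le> gen_cost c qp r" by (rule c2)
    have D: "(gen_cost c qp r + gen_cost c qp r') / 2 \<le> gen_cost c qp r" using C by (simp add: field_simps)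
    have "gen_cost c qp m < gen_cost c qp m" using A D B by (meson less_le_trans order_trans)
    then show False by simp
  qed
  have y0: "incidence src dst *v (v' - F *v \<phi>') = 0"
    using feas' w0 p' unfolding FRp_feasible_def by (simp add: matrix_vector_mult_diff_distrib lap_mult)
  show ?thesis using w0 req pt y0 by simp
qed

end
lemma sc_convex_on:
  assumes "strictly_convex g" shows "convex_on UNIV g"
proof (rule convex_onI)
  fix t x y :: real assume t: "0 < t" "t < 1"
  show "g ((1 - t) *\<^sub>R x + t *\<^sub>R y) \<le> (1 - t) * g x + t * g y"
  proof (cases "x = y")
    case True then show ?thesis by (simp add: algebra_simps)
  next
    case False then show ?thesis using assms t unfolding strictly_convex_def by (simp add: less_imp_le)
  qed
qed simp

lemma C1_deriv: "g C1_differentiable_on UNIV \<Longrightarrow> (g has_real_derivative deriv g x) (at x)"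
  using C1_differentiable_on_eq DERIV_deriv_iff_real_differentiable by blast

lemma grad_ineq:
  assumes "strictly_convex g" "(g has_real_derivative g') (at x)"
  shows "g y \<ge> g x + g' * (y - x)"
proof -
  have "g y - g x \<ge> g' * (y - x)"
    by (rule convex_on_imp_above_tangent[where A=UNIV]) (use assms sc_convex_on in auto)
  then show ?thesis by simp
qed

lemma sc_add_lin: "strictly_convex g \<Longrightarrow> strictly_convex (\<lambda>x. g x + p * x)"
  unfolding strictly_convex_def
proof (intro allI impI)
  fix x y t :: real
  assume H: "\<forall>x y t. x \<noteq> y \<and> 0 < t \<and> t < 1 \<longrightarrow> g ((1 - t) * x + t * y) < (1 - t) * g x + t * g y"
    and "x \<noteq> y \<and> 0 < t \<and> t < 1"
  then have "g ((1 - t) * x + t * y) < (1 - t) * g x + t * g y" by blast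
  then show "g ((1 - t) * x + t * y) + p * ((1 - t) * x + t * y) < (1 - t) * (g x + p * x) + t * (g y + p * y)"
    by (simp add: algebra_simps)
qed

lemma sc_reflect: "strictly_convex h \<Longrightarrow> strictly_convex (\<lambda>x. h (- x))"
  unfolding strictly_convex_def
proof (intro allI impI)
  fix x y t :: real
  assume H: "\<forall>x y t. x \<noteq> y \<and> 0 < t \<and> t < 1 \<longrightarrow> h ((1 - t) * x + t * y) < (1 - t) * h x + t * h y"
    and a: "x \<noteq> y \<and> 0 < t \<and> t < 1"
  have "-x \<noteq> -y \<and> 0 < t \<and> t < 1" using a by simp
  then have "h ((1 - t) * (-x) + t * (-y)) < (1 - t) * h (-x) + t * h (-y)" using H by blast
  moreover have "- ((1 - t) * x + t * y) = (1 - t) * (-x) + t * (-y)" by simp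
  ultimately show "h (- ((1 - t) * x + t * y)) < (1 - t) * h (- x) + t * h (- y)" by metis
qed

lemma sc_strict_incr:
  assumes sc: "strictly_convex h" and mn: "\<forall>t. h x0 \<le> h t" and yz: "x0 \<le> y" "y < z"
  shows "h y < h z"
proof (cases "y = x0")
  case True
  have ne: "x0 \<noteq> z" using yz True by simp
  have "h ((1 - 1/2) * x0 + (1/2) * z) < (1 - 1/2) * h x0 + (1/2) * h z"
    using sc ne unfolding strictly_convex_def by (metis half_gt_zero_iff zero_less_one field_sum_of_halves less_add_same_cancel2)
  moreover have "h x0 \<le> h ((1 - 1/2) * x0 + (1/2) * z)" using mn by blast
  ultimately have "h x0 < h z" by (simp add: field_simps)
  then show ?thesis using True by simp
next
  case False
  then have xy: "x0 < y" using yz by simp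
  define t where "t = (y - x0) / (z - x0)"
  have t0: "0 < t" and t1: "t < 1" using xy yz unfolding t_def by (auto simp: field_simps)
  have tz: "t * (z - x0) = y - x0" unfolding t_def using xy yz by simp
  have ye: "y = (1 - t) * x0 + t * z" using tz by (simp add: algebra_simps)
  have "h ((1 - t) * x0 + t * z) < (1 - t) * h x0 + t * h z"
    using sc t0 t1 xy yz unfolding strictly_convex_def by auto
  then have "h y < (1 - t) * h x0 + t * h z" using ye by simp
  also have "\<dots> \<le> (1 - t) * h z + t * h z" using mn t1 by (simp add: mult_left_mono)
  also have "\<dots> = h z" by (simp add: algebra_simps)
  finally show ?thesis .
qed

lemma sc_strict_decr:
  assumes sc: "strictly_convex h" and mn: "\<forall>t. h x0 \<le> h t" and yz: "y \<le> x0" "z < y"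
  shows "h y < h z"
proof -
  have "(\<lambda>x. h (- x)) (- y) < (\<lambda>x. h (- x)) (- z)"
    by (rule sc_strict_incr[OF sc_reflect[OF sc], of "- x0"]) (use mn yz in auto)
  then show ?thesis by simp
qed

lemma clamp_min_unique:
  assumes sc: "strictly_convex h" and mn: "\<forall>t. h x0 \<le> h t" and ab: "a \<le> b"
    and t: "t \<in> {a..b}" "t \<noteq> clamp a b x0"
  shows "h (clamp a b x0) < h t"
proof -
  consider "x0 < a" | "a \<le> x0 \<and> x0 \<le> b" | "b < x0" by linarith
  then show ?thesis
  proof cases
    case 1
    then have "clamp a b x0 = a" using ab by (simp add: clamp_def)
    then show ?thesis using sc_strict_incr[OF sc mn, of a t] 1 t by auto
  next
    case 2
    then have ce: "clamp a b x0 = x0" by (simp add: clamp_def)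
    show ?thesis
    proof (cases "t > x0")
      case True then show ?thesis using sc_strict_incr[OF sc mn, of x0 t] ce by auto
    next
      case False then have "t < x0" using t ce by auto
      then show ?thesis using sc_strict_decr[OF sc mn, of x0 t] ce by auto
    qed
  next
    case 3
    then have "clamp a b x0 = b" using ab by (simp add: clamp_def)
    then show ?thesis using sc_strict_decr[OF sc mn, of b t] 3 t by auto
  qed
qed

lemma clamp_in: "a \<le> b \<Longrightarrow> clamp a b x \<in> {a..b}"
  by (auto simp: clamp_def)

lemma clamp_min_iff:
  assumes sc: "strictly_convex h" and mn: "\<forall>t. h x0 \<le> h t" and ab: "a \<le> b"
  shows "(s \<in> {a..b} \<and> (\<forall>t\<in>{a..b}. h s \<le> h t)) \<longleftrightarrow> s = clamp a b x0"
proof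
  assume H: "s \<in> {a..b} \<and> (\<forall>t\<in>{a..b}. h s \<le> h t)"
  show "s = clamp a b x0"
  proof (rule ccontr)
    assume "s \<noteq> clamp a b x0"
    then have "h (clamp a b x0) < h s" using clamp_min_unique[OF sc mn ab] H by blast
    moreover have "h s \<le> h (clamp a b x0)" using H clamp_in[OF ab] by blast
    ultimately show False by simp
  qed
next
  assume "s = clamp a b x0"
  then show "s \<in> {a..b} \<and> (\<forall>t\<in>{a..b}. h s \<le> h t)"
    using clamp_in[OF ab] clamp_min_unique[OF sc mn ab] by (metis less_imp_le order_refl)
qed

lemma sc_shift: "strictly_convex g \<Longrightarrow> strictly_convex (\<lambda>x. g (q + x))"
  unfolding strictly_convex_def
proof (intro allI impI)
  fix x y t :: real
  assume H: "\<forall>x y t. x \<noteq> y \<and> 0 < t \<and> t < 1 \<longrightarrow> g ((1 - t) * x + t * y) < (1 - t) * g x + t * g y"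
    and a: "x \<noteq> y \<and> 0 < t \<and> t < 1"
  have "q + x \<noteq> q + y \<and> 0 < t \<and> t < 1" using a by simp
  then have "g ((1 - t) * (q + x) + t * (q + y)) < (1 - t) * g (q + x) + t * g (q + y)" using H by blast
  moreover have "q + ((1 - t) * x + t * y) = (1 - t) * (q + x) + t * (q + y)" by (simp add: algebra_simps)
  ultimately show "g (q + ((1 - t) * x + t * y)) < (1 - t) * g (q + x) + t * g (q + y)" by metis
qed

lemma ctrl_min:
  assumes sc: "strictly_convex g" and C1: "g C1_differentiable_on UNIV" and sj: "surj (deriv g)"
    and lh: "lo \<le> hi"
  shows "(x \<in> {lo - q..hi - q} \<and> (\<forall>t\<in>{lo - q..hi - q}. g (q + x) + p * x \<le> g (q + t) + p * t))
         \<longleftrightarrow> x = clamp (lo - q) (hi - q) (inv (deriv g) (- p) - q)"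
proof -
  define x0 where "x0 = inv (deriv g) (- p) - q"
  have dx0: "deriv g (q + x0) = - p" unfolding x0_def using sj by (simp add: surj_f_inv_f)
  have mn: "\<forall>t. g (q + x0) + p * x0 \<le> g (q + t) + p * t"
  proof
    fix t
    have "g (q + t) \<ge> g (q + x0) + deriv g (q + x0) * ((q + t) - (q + x0))"
      by (rule grad_ineq[OF sc C1_deriv[OF C1]])
    then show "g (q + x0) + p * x0 \<le> g (q + t) + p * t" using dx0 by (simp add: algebra_simps)
  qed
  have sch: "strictly_convex (\<lambda>t. g (q + t) + p * t)" by (rule sc_add_lin[OF sc_shift[OF sc]])
  have ab: "lo - q \<le> hi - q" using lh by simp
  show ?thesis using clamp_min_iff[OF sch, of x0, OF _ ab, of x] mn unfolding x0_def by simp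
qed

lemma transpose_CB: "transpose (incidence src dst ** diag_mat B) = flowmat src dst B"
  by (simp add: matrix_transpose_mul transpose_diag flowmat_def)

context net begin

lemma inner_L: "\<pi> \<bullet> (L *v \<phi>) = (L *v \<pi>) \<bullet> \<phi>"
  by (simp add: inner_mat lap_sym)

lemma inner_CB: "((incidence src dst ** diag_mat B) *v \<mu>) \<bullet> \<phi> = \<mu> \<bullet> (F *v \<phi>)"
  by (simp only: inner_mat transpose_CB)

lemma lagr0:
  "FRp_lagrangian c src dst B D f qb qp d r \<omega> v \<phi> 0 \<pi> mulow mubar =
     gen_cost c qp r + (\<Sum>n\<in>UNIV. D$n * (\<omega>$n)\<^sup>2 / 2) + \<pi> \<bullet> (qb + qp + r - d)
     - mubar \<bullet> f - mulow \<bullet> f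
     + ((incidence src dst ** diag_mat B) *v (mubar - mulow) - L *v \<pi>) \<bullet> \<phi>"
proof -
  have "\<pi> \<bullet> (qb + qp + r - d - L *v \<phi>) = \<pi> \<bullet> (qb + qp + r - d) - (L *v \<pi>) \<bullet> \<phi>"
    by (simp add: inner_diff_right inner_L)
  moreover have "mubar \<bullet> (F *v \<phi> - f) + mulow \<bullet> (- f - F *v \<phi>)
      = ((incidence src dst ** diag_mat B) *v (mubar - mulow)) \<bullet> \<phi> - mubar \<bullet> f - mulow \<bullet> f"
    by (simp add: inner_CB inner_diff_right inner_diff_left algebra_simps)
  ultimately show ?thesis
    unfolding FRp_lagrangian_def FRp_obj_split by (simp add: inner_diff_left algebra_simps)
qed

end

lemma inner_nonneg_nonpos: "(\<forall>l. 0 \<le> a$l) \<Longrightarrow> (\<forall>l. b$l \<le> 0) \<Longrightarrow> a \<bullet> (b::real^'l) \<le> 0"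
  unfolding inner_vec_def by (intro sum_nonpos) (simp add: mult_nonneg_nonpos)

lemma inner_nonneg_nonpos_zero:
  assumes "\<forall>l. 0 \<le> a$l" "\<forall>l. b$l \<le> 0" "a \<bullet> (b::real^'l) = 0"
  shows "\<forall>l. a$l * b$l = 0"
proof -
  have "(\<Sum>l\<in>UNIV. - (a$l * b$l)) = 0" using assms(3) unfolding inner_vec_def by (simp add: sum_negf)
  moreover have "\<forall>l\<in>UNIV. 0 \<le> - (a$l * b$l)" using assms(1,2) by (simp add: mult_nonneg_nonpos)
  ultimately have "\<forall>l\<in>UNIV. - (a$l * b$l) = 0" using sum_nonneg_eq_0_iff[of UNIV "\<lambda>l. - (a$l * b$l)"] by auto
  then show ?thesis by simp
qed

locale prob = net src dst B for src dst :: "'l::finite \<Rightarrow> 'n::finite" and B :: "real^'l" +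
  fixes c :: "'n \<Rightarrow> real \<Rightarrow> real" and D qlo qhi qb qp d r r' \<omega>' \<phi>' :: "real^'n"
    and f v' :: "real^'l"
  assumes D_pos: "\<forall>n. 0 < D$n"
    and cvx: "\<forall>n. strictly_convex (c n)"
    and C1: "\<forall>n. c n C1_differentiable_on UNIV"
    and sj: "\<forall>n. surj (deriv (c n))"
    and FR_opt: "FR_optimal c src dst B f qlo qhi qb qp d r"
    and FRp_opt: "FRp_optimal c src dst B D f qlo qhi qb qp d r' \<omega>' v' \<phi>'"
begin

abbreviation "P \<equiv> gen_cost c qp r'"
abbreviation "CB \<equiv> incidence src dst ** diag_mat B"

lemma P1: "\<omega>' = 0 \<and> r = r' \<and> ptdf src dst B *v (qb + qp + r - d) = F *v \<phi>' \<and>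
         incidence src dst *v (v' - F *v \<phi>') = 0"
  by (rule part1[OF D_pos cvx FR_opt FRp_opt])

lemma w0: "\<omega>' = 0" using P1 by blast

lemma feas': "FRp_feasible src dst B D f qlo qhi qb qp d r' \<omega>' v' \<phi>'"
  using FRp_opt unfolding FRp_optimal_def by blast

lemma p': "qb + qp + r' - d = L *v \<phi>'" using feas' unfolding FRp_feasible_def by blast
lemma b': "qb + qp + r' - d - diag_mat D *v \<omega>' = incidence src dst *v v'"
  using feas' unfolding FRp_feasible_def by blast
lemma fl': "\<forall>l. - f$l \<le> (F *v \<phi>')$l \<and> (F *v \<phi>')$l \<le> f$l"
  using feas' unfolding FRp_feasible_def by blast
lemma box': "box_ok qlo qhi qp r'" using feas' unfolding FRp_feasible_def by blast
lemma lohi: "qlo$n \<le> qhi$n" using box' unfolding box_ok_def by (meson order_trans)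

lemma lagr_at_opt:
  "FRp_lagrangian c src dst B D f qb qp d r' \<omega>' v' \<phi>' lam \<pi> mulow mubar
     = P + mubar \<bullet> (F *v \<phi>' - f) + mulow \<bullet> (- f - F *v \<phi>')"
  unfolding FRp_lagrangian_def using b' p' w0 by (simp add: FRp_obj_split)

lemma weak:
  assumes "dual_feasible mulow mubar"
  shows "FRp_dual c src dst B D f qlo qhi qb qp d lam \<pi> mulow mubar \<le> ereal P"
proof -
  have "FRp_dual c src dst B D f qlo qhi qb qp d lam \<pi> mulow mubar
        \<le> ereal (FRp_lagrangian c src dst B D f qb qp d r' \<omega>' v' \<phi>' lam \<pi> mulow mubar)"
    unfolding FRp_dual_def by (rule INF_lower2[of "(r', \<omega>', v', \<phi>')"]) (use box' in auto)
  also have "\<dots> \<le> ereal P"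
  proof -
    have "mubar \<bullet> (F *v \<phi>' - f) \<le> 0"
      using assms fl' unfolding dual_feasible_def by (intro inner_nonneg_nonpos) auto
    moreover have "mulow \<bullet> (- f - F *v \<phi>') \<le> 0"
      using assms fl' unfolding dual_feasible_def by (intro inner_nonneg_nonpos) auto
    ultimately show ?thesis unfolding lagr_at_opt by simp
  qed
  finally show ?thesis .
qed

lemma cost_lin: "gen_cost c qp x + \<pi> \<bullet> x = (\<Sum>n\<in>UNIV. c n (qp$n + x$n) + \<pi>$n * x$n)"
  by (simp add: gen_cost_def inner_vec_def sum.distrib)

lemma lower:
  assumes S: "L *v \<pi> = CB *v (mubar - mulow)"
    and cm: "\<forall>n. \<forall>t\<in>{qlo$n - qp$n..qhi$n - qp$n}. c n (qp$n + r'$n) + \<pi>$n * r'$n \<le> c n (qp$n + t) + \<pi>$n * t"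
    and CS1: "mubar \<bullet> (F *v \<phi>' - f) = 0" and CS2: "mulow \<bullet> (- f - F *v \<phi>') = 0"
  shows "ereal P \<le> FRp_dual c src dst B D f qlo qhi qb qp d 0 \<pi> mulow mubar"
  unfolding FRp_dual_def
proof (rule INF_greatest)
  fix x :: "(real^'n) \<times> (real^'n) \<times> (real^'l) \<times> (real^'n)" assume "x \<in> {(r, \<omega>, v, \<phi>). box_ok qlo qhi qp r}"
  then obtain r \<omega> \<phi> :: "real^'n" and v :: "real^'l" where x: "x = (r, \<omega>, v, \<phi>)" and bx: "box_ok qlo qhi qp r" by auto
  have pe: "\<pi> \<bullet> (qb + qp + y - d) = \<pi> \<bullet> (qb + qp - d) + \<pi> \<bullet> y" for y
    by (simp add: inner_add_right inner_diff_right algebra_simps)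
  have mono: "gen_cost c qp r' + \<pi> \<bullet> r' \<le> gen_cost c qp r + \<pi> \<bullet> r"
    unfolding cost_lin
  proof (rule sum_mono)
    fix n
    have "r$n \<in> {qlo$n - qp$n..qhi$n - qp$n}" using bx unfolding box_ok_def by (auto simp: algebra_simps)
    then show "c n (qp$n + r'$n) + \<pi>$n * r'$n \<le> c n (qp$n + r$n) + \<pi>$n * r$n" using cm by blast
  qed
  have Dn: "0 \<le> (\<Sum>n\<in>UNIV. D$n * (\<omega>$n)\<^sup>2 / 2)" using D_pos by (intro sum_nonneg) (simp add: less_imp_le)
  have ppi: "\<pi> \<bullet> (qb + qp + r' - d) = mubar \<bullet> f + mulow \<bullet> f"
  proof -
    have "\<pi> \<bullet> (qb + qp + r' - d) = (mubar - mulow) \<bullet> (F *v \<phi>')"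
      unfolding p' inner_L S inner_CB ..
    also have "\<dots> = mubar \<bullet> f + mulow \<bullet> f"
      using CS1 CS2 by (simp add: inner_diff_left inner_diff_right algebra_simps)
    finally show ?thesis .
  qed
  have "P \<le> gen_cost c qp r + (\<Sum>n\<in>UNIV. D$n * (\<omega>$n)\<^sup>2 / 2) + \<pi> \<bullet> (qb + qp + r - d) - mubar \<bullet> f - mulow \<bullet> f"
    using mono Dn ppi pe[of r] pe[of r'] by linarith
  then show "ereal P \<le> ereal (case x of (r, \<omega>, v, \<phi>) \<Rightarrow> FRp_lagrangian c src dst B D f qb qp d r \<omega> v \<phi> 0 \<pi> mulow mubar)"
    unfolding x by (simp add: lagr0 S)
qed

end
lemma diag_pos_zero: "(\<forall>i. 0 < z$i) \<Longrightarrow> diag_mat z *v x = 0 \<longleftrightarrow> x = 0"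
  by (auto simp: diag_mat_mult vec_eq_iff) (metis less_irrefl)

lemma proj_plus_zero_iff:
  assumes "\<forall>l. 0 \<le> a$l" "\<forall>l. b$l \<le> 0"
  shows "proj_plus a b = 0 \<longleftrightarrow> a \<bullet> (b::real^'l) = 0"
proof -
  have "proj_plus a b = 0 \<longleftrightarrow> (\<forall>l. a$l * b$l = 0)"
    using assms unfolding proj_plus_def vec_eq_iff
    by (auto simp: less_le)
  also have "\<dots> \<longleftrightarrow> a \<bullet> b = 0"
  proof
    assume h: "\<forall>l. a$l * b$l = 0"
    show "a \<bullet> b = 0" unfolding inner_vec_def by (rule sum.neutral) (use h in simp)
  qed (use inner_nonneg_nonpos_zero[OF assms] in blast)
  finally show ?thesis .
qed

lemma sum_upd:
  fixes g :: "'n::finite \<Rightarrow> real \<Rightarrow> real"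
  shows "(\<Sum>k\<in>UNIV. g k ((\<chi> j. if j = n then t else x$j)$k)) = (\<Sum>k\<in>UNIV. g k (x$k)) - g n (x$n) + g n t"
proof -
  have "(\<Sum>k\<in>UNIV. g k ((\<chi> j. if j = n then t else x$j)$k)) = g n t + (\<Sum>k\<in>UNIV - {n}. g k (x$k))"
    by (simp add: sum.remove[of UNIV n])
  moreover have "(\<Sum>k\<in>UNIV. g k (x$k)) = g n (x$n) + (\<Sum>k\<in>UNIV - {n}. g k (x$k))"
    by (simp add: sum.remove[of UNIV n])
  ultimately show ?thesis by simp
qed

context prob begin

definition kkt where
  "kkt \<pi> mulow mubar \<longleftrightarrow> dual_feasible mulow mubar \<and> L *v \<pi> = CB *v (mubar - mulow) \<and>
     (\<forall>n. \<forall>t\<in>{qlo$n - qp$n..qhi$n - qp$n}. c n (qp$n + r'$n) + \<pi>$n * r'$n \<le> c n (qp$n + t) + \<pi>$n * t) \<and>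
     mubar \<bullet> (F *v \<phi>' - f) = 0 \<and> mulow \<bullet> (- f - F *v \<phi>') = 0"

lemma ctrl_iff:
  "r' = control_law c qlo qhi qp \<omega>' \<pi> \<longleftrightarrow>
   (\<forall>n. \<forall>t\<in>{qlo$n - qp$n..qhi$n - qp$n}. c n (qp$n + r'$n) + \<pi>$n * r'$n \<le> c n (qp$n + t) + \<pi>$n * t)"
proof -
  have inI: "r'$n \<in> {qlo$n - qp$n..qhi$n - qp$n}" for n using box' unfolding box_ok_def by (auto simp: algebra_simps)
  have "r' = control_law c qlo qhi qp \<omega>' \<pi> \<longleftrightarrow>
        (\<forall>n. r'$n = clamp (qlo$n - qp$n) (qhi$n - qp$n) (inv (deriv (c n)) (- \<pi>$n) - qp$n))"
    unfolding control_law_def w0 by (simp add: vec_eq_iff)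
  also have "\<dots> \<longleftrightarrow> (\<forall>n. \<forall>t\<in>{qlo$n - qp$n..qhi$n - qp$n}. c n (qp$n + r'$n) + \<pi>$n * r'$n \<le> c n (qp$n + t) + \<pi>$n * t)"
  proof -
    have "r'$n = clamp (qlo$n - qp$n) (qhi$n - qp$n) (inv (deriv (c n)) (- \<pi>$n) - qp$n) \<longleftrightarrow>
          (\<forall>t\<in>{qlo$n - qp$n..qhi$n - qp$n}. c n (qp$n + r'$n) + \<pi>$n * r'$n \<le> c n (qp$n + t) + \<pi>$n * t)" for n
      using ctrl_min[of "c n" "qlo$n" "qhi$n" "r'$n" "qp$n" "\<pi>$n"] cvx C1 sj lohi[of n] inI[of n] by auto
    then show ?thesis by blast
  qed
  finally show ?thesis .
qed

lemma eq_kkt: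
  assumes gains: "\<forall>n. 0 < zeta_pi$n \<and> 0 < chi_phi$n" "\<forall>l. 0 < zeta_mubar$l \<and> 0 < zeta_mulow$l"
  shows "cl_equilibrium c src dst B D M f qlo qhi zeta_pi chi_phi zeta_mubar zeta_mulow qb qp d
           r' \<omega>' \<phi>' \<phi>' \<pi> mulow mubar \<longleftrightarrow> kkt \<pi> mulow mubar"
proof -
  have zp: "\<forall>i. 0 < zeta_pi$i" "\<forall>i. 0 < chi_phi$i" "\<forall>i. 0 < zeta_mubar$i" "\<forall>i. 0 < zeta_mulow$i"
    using gains by auto
  have C: "(\<chi> n. (qb + qp + r' - d - diag_mat D *v \<omega>' - L *v \<phi>')$n / M$n) = 0"
    using p' w0 by (simp add: vec_eq_iff diag_mat_mult)
  have Dd: "diag_mat zeta_pi *v (qb + qp + r' - d - L *v \<phi>') = 0" using p' by (simp add: diag_mat_mult vec_eq_iff)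
  have G: "diag_mat chi_phi *v (L *v \<pi> - CB *v (mubar - mulow)) = 0 \<longleftrightarrow> L *v \<pi> = CB *v (mubar - mulow)"
    using diag_pos_zero[OF zp(2)] by simp
  have E: "diag_mat zeta_mubar *v proj_plus mubar (F *v \<phi>' - f) = 0 \<longleftrightarrow> mubar \<bullet> (F *v \<phi>' - f) = 0"
    if "dual_feasible mulow mubar"
    using diag_pos_zero[OF zp(3)] proj_plus_zero_iff[of mubar "F *v \<phi>' - f"] that fl'
    unfolding dual_feasible_def by simp
  have E2: "diag_mat zeta_mulow *v proj_plus mulow (- f - F *v \<phi>') = 0 \<longleftrightarrow> mulow \<bullet> (- f - F *v \<phi>') = 0"
    if "dual_feasible mulow mubar"
    using diag_pos_zero[OF zp(4)] proj_plus_zero_iff[of mulow "- f - F *v \<phi>'"] that fl'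
    unfolding dual_feasible_def by (simp add: algebra_simps)
  show ?thesis unfolding cl_equilibrium_def kkt_def ctrl_iff
    using C Dd G E E2 w0 by blast
qed

lemma lagr_ge:
  assumes "ereal P \<le> FRp_dual c src dst B D f qlo qhi qb qp d 0 \<pi> mulow mubar" "box_ok qlo qhi qp x"
  shows "P \<le> FRp_lagrangian c src dst B D f qb qp d x \<omega> v \<phi> 0 \<pi> mulow mubar"
proof -
  have "FRp_dual c src dst B D f qlo qhi qb qp d 0 \<pi> mulow mubar
        \<le> ereal (FRp_lagrangian c src dst B D f qb qp d x \<omega> v \<phi> 0 \<pi> mulow mubar)"
    unfolding FRp_dual_def by (rule INF_lower2[of "(x, \<omega>, v, \<phi>)"]) (use assms(2) in auto)
  with assms(1) have "ereal P \<le> ereal (FRp_lagrangian c src dst B D f qb qp d x \<omega> v \<phi> 0 \<pi> mulow mubar)"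
    by (rule order_trans)
  then show ?thesis by simp
qed

end
context prob begin

lemma kkt_lower: "kkt \<pi> mulow mubar \<Longrightarrow> ereal P \<le> FRp_dual c src dst B D f qlo qhi qb qp d 0 \<pi> mulow mubar"
  unfolding kkt_def by (intro lower) auto

lemma dual_eq_kkt:
  assumes Pl: "ereal P \<le> FRp_dual c src dst B D f qlo qhi qb qp d 0 \<pi> mulow mubar"
    and df: "dual_feasible mulow mubar"
  shows "kkt \<pi> mulow mubar"
proof -
  let ?La = "\<lambda>x \<omega> v \<phi>. FRp_lagrangian c src dst B D f qb qp d x \<omega> v \<phi> 0 \<pi> mulow mubar"
  have s1: "mubar \<bullet> (F *v \<phi>' - f) \<le> 0"
    using df fl' unfolding dual_feasible_def by (intro inner_nonneg_nonpos) auto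
  have s2: "mulow \<bullet> (- f - F *v \<phi>') \<le> 0"
    using df fl' unfolding dual_feasible_def by (intro inner_nonneg_nonpos) auto
  have "P \<le> ?La r' \<omega>' v' \<phi>'" by (rule lagr_ge[OF Pl box'])
  then have ge: "P \<le> P + mubar \<bullet> (F *v \<phi>' - f) + mulow \<bullet> (- f - F *v \<phi>')" unfolding lagr_at_opt .
  have CS1: "mubar \<bullet> (F *v \<phi>' - f) = 0" and CS2: "mulow \<bullet> (- f - F *v \<phi>') = 0"
    using ge s1 s2 by linarith+
  have Lopt: "?La r' \<omega>' v' \<phi>' = P" unfolding lagr_at_opt CS1 CS2 by simp
  define w where "w = CB *v (mubar - mulow) - L *v \<pi>"
  define K where "K = gen_cost c qp r' + \<pi> \<bullet> (qb + qp + r' - d) - mubar \<bullet> f - mulow \<bullet> f"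
  have LK: "?La r' \<omega>' v' \<phi> = K + w \<bullet> \<phi>" for \<phi>
    unfolding lagr0 w_def K_def w0 by simp
  have "P \<le> ?La r' \<omega>' v' (\<phi>' - w)" by (rule lagr_ge[OF Pl box'])
  then have "P \<le> K + w \<bullet> \<phi>' - w \<bullet> w" unfolding LK by (simp add: inner_diff_right)
  moreover have "P = K + w \<bullet> \<phi>'" using Lopt LK by simp
  ultimately have "w \<bullet> w \<le> 0" by linarith
  then have "w \<bullet> w = 0" using inner_ge_zero[of w] by linarith
  then have "w = 0" by simp
  then have S: "L *v \<pi> = CB *v (mubar - mulow)" unfolding w_def by simp
  have cm: "\<forall>n. \<forall>t\<in>{qlo$n - qp$n..qhi$n - qp$n}. c n (qp$n + r'$n) + \<pi>$n * r'$n \<le> c n (qp$n + t) + \<pi>$n * t"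
  proof (intro allI ballI)
    fix n t assume t: "t \<in> {qlo$n - qp$n..qhi$n - qp$n}"
    define r2 where "r2 = (\<chi> j. if j = n then t else r'$j)"
    have bx2: "box_ok qlo qhi qp r2" using box' t unfolding box_ok_def r2_def by (auto simp: algebra_simps)
    have pe: "\<pi> \<bullet> (qb + qp + y - d) = \<pi> \<bullet> (qb + qp - d) + \<pi> \<bullet> y" for y
      by (simp add: inner_add_right inner_diff_right algebra_simps)
    have "P \<le> ?La r2 \<omega>' v' \<phi>'" by (rule lagr_ge[OF Pl bx2])
    then have "P \<le> gen_cost c qp r2 + \<pi> \<bullet> (qb + qp + r2 - d) - mubar \<bullet> f - mulow \<bullet> f + w \<bullet> \<phi>'"
      unfolding lagr0 w_def w0 by simp
    moreover have "P = gen_cost c qp r' + \<pi> \<bullet> (qb + qp + r' - d) - mubar \<bullet> f - mulow \<bullet> f + w \<bullet> \<phi>'"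
      using Lopt LK K_def by simp
    ultimately have "gen_cost c qp r' + \<pi> \<bullet> r' \<le> gen_cost c qp r2 + \<pi> \<bullet> r2"
      using pe[of r2] pe[of r'] by linarith
    then have "(\<Sum>k\<in>UNIV. c k (qp$k + r'$k) + \<pi>$k * r'$k) \<le> (\<Sum>k\<in>UNIV. c k (qp$k + r2$k) + \<pi>$k * r2$k)"
      unfolding cost_lin .
    also have "(\<Sum>k\<in>UNIV. c k (qp$k + r2$k) + \<pi>$k * r2$k)
       = (\<Sum>k\<in>UNIV. c k (qp$k + r'$k) + \<pi>$k * r'$k) - (c n (qp$n + r'$n) + \<pi>$n * r'$n) + (c n (qp$n + t) + \<pi>$n * t)"
      unfolding r2_def using sum_upd[of "\<lambda>k y. c k (qp$k + y) + \<pi>$k * y" n t r'] by simp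
    finally show "c n (qp$n + r'$n) + \<pi>$n * r'$n \<le> c n (qp$n + t) + \<pi>$n * t" by simp
  qed
  show ?thesis unfolding kkt_def using df S cm CS1 CS2 by blast
qed

lemma pd_kkt:
  assumes ex: "\<exists>\<pi> mulow mubar. kkt \<pi> mulow mubar"
  shows "FRp_primal_dual_optimal c src dst B D f qlo qhi qb qp d r' \<omega>' v' \<phi>' \<pi> mulow mubar
         \<longleftrightarrow> kkt \<pi> mulow mubar"
proof
  assume H: "FRp_primal_dual_optimal c src dst B D f qlo qhi qb qp d r' \<omega>' v' \<phi>' \<pi> mulow mubar"
  obtain \<pi>s mls mbs where ks: "kkt \<pi>s mls mbs" using ex by blast
  have dfs: "dual_feasible mls mbs" using ks unfolding kkt_def by blast
  have df: "dual_feasible mulow mubar" using H unfolding FRp_primal_dual_optimal_def by blast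
  have "FRp_dual c src dst B D f qlo qhi qb qp d 0 \<pi>s mls mbs \<le> FRp_dual c src dst B D f qlo qhi qb qp d 0 \<pi> mulow mubar"
    using H dfs unfolding FRp_primal_dual_optimal_def w0 by blast
  then have "ereal P \<le> FRp_dual c src dst B D f qlo qhi qb qp d 0 \<pi> mulow mubar"
    using kkt_lower[OF ks] by (rule order_trans[rotated])
  then show "kkt \<pi> mulow mubar" using dual_eq_kkt df by blast
next
  assume K: "kkt \<pi> mulow mubar"
  have "FRp_dual c src dst B D f qlo qhi qb qp d lam' \<pi>' mulow' mubar' \<le> FRp_dual c src dst B D f qlo qhi qb qp d \<omega>' \<pi> mulow mubar"
    if "dual_feasible mulow' mubar'" for lam' \<pi>' mulow' mubar'
    using weak[OF that] kkt_lower[OF K] unfolding w0 by (rule order_trans)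
  then show "FRp_primal_dual_optimal c src dst B D f qlo qhi qb qp d r' \<omega>' v' \<phi>' \<pi> mulow mubar"
    unfolding FRp_primal_dual_optimal_def using FRp_opt K unfolding kkt_def by blast
qed

end
lemma farkas:
  fixes a :: "'i \<Rightarrow> 'a::euclidean_space"
  assumes fin: "finite I" and H: "\<forall>x. (\<forall>i\<in>I. 0 \<le> a i \<bullet> x) \<longrightarrow> 0 \<le> g \<bullet> x"
  shows "\<exists>lm. (\<forall>i\<in>I. 0 \<le> lm i) \<and> g = (\<Sum>i\<in>I. lm i *\<^sub>R a i)"
proof -
  define K where "K = {y. \<exists>lm. (\<forall>i\<in>I. 0 \<le> lm i) \<and> y = (\<Sum>i\<in>I. lm i *\<^sub>R a i)}"
  have aK: "a ` I \<subseteq> K"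
  proof
    fix y assume "y \<in> a ` I"
    then obtain j where j: "j \<in> I" "y = a j" by auto
    have "(\<Sum>i\<in>I. (if i = j then 1 else 0) *\<^sub>R a i) = (\<Sum>i\<in>I. if i = j then a i else 0)"
      by (rule sum.cong) auto
    also have "\<dots> = a j" using fin j(1) by simp
    finally have "(\<Sum>i\<in>I. (if i = j then 1 else 0) *\<^sub>R a i) = a j" .
    then show "y \<in> K" unfolding K_def using j by (intro CollectI exI[of _ "\<lambda>i. if i = j then 1 else 0"]) auto
  qed
  have cK: "convex_cone K"
    unfolding convex_cone_def
  proof (intro conjI)
    show "K \<noteq> {}" unfolding K_def by (auto intro!: exI[of _ "\<lambda>i. 0"])
    show "convex K"
      unfolding convex_def
    proof (intro ballI allI impI)
      fix x y and u v :: real assume "x \<in> K" "y \<in> K" "0 \<le> u" "0 \<le> v" "u + v = 1"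
      then obtain lm mu where l: "\<forall>i\<in>I. 0 \<le> lm i" "x = (\<Sum>i\<in>I. lm i *\<^sub>R a i)"
        and m: "\<forall>i\<in>I. 0 \<le> mu i" "y = (\<Sum>i\<in>I. mu i *\<^sub>R a i)" unfolding K_def by auto
      have e1: "u *\<^sub>R x + v *\<^sub>R y = (\<Sum>i\<in>I. (u * lm i + v * mu i) *\<^sub>R a i)"
        unfolding l m by (simp add: scaleR_sum_right sum.distrib scaleR_add_left)
      have e2: "\<forall>i\<in>I. 0 \<le> u * lm i + v * mu i" using l m \<open>0 \<le> u\<close> \<open>0 \<le> v\<close> by simp
      show "u *\<^sub>R x + v *\<^sub>R y \<in> K" unfolding K_def mem_Collect_eq
        by (rule exI[of _ "\<lambda>i. u * lm i + v * mu i"], rule conjI[OF e2 e1])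
    qed
    show "conic K"
      unfolding conic_def
    proof (intro allI impI)
      fix x and t :: real assume "x \<in> K" "0 \<le> t"
      then obtain lm where l: "\<forall>i\<in>I. 0 \<le> lm i" "x = (\<Sum>i\<in>I. lm i *\<^sub>R a i)" unfolding K_def by auto
      have e1: "t *\<^sub>R x = (\<Sum>i\<in>I. (t * lm i) *\<^sub>R a i)" unfolding l by (simp add: scaleR_sum_right)
      have e2: "\<forall>i\<in>I. 0 \<le> t * lm i" using l \<open>0 \<le> t\<close> by simp
      show "t *\<^sub>R x \<in> K" unfolding K_def mem_Collect_eq
        by (rule exI[of _ "\<lambda>i. t * lm i"], rule conjI[OF e2 e1])
    qed
  qed
  define Hc where "Hc = convex_cone hull (a ` I)"
  have HK: "Hc \<subseteq> K" unfolding Hc_def using aK cK by (rule hull_minimal)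
  have cl: "closed Hc" unfolding Hc_def using fin by (simp add: closed_convex_cone_hull)
  have cv: "convex Hc" unfolding Hc_def by (rule convex_convex_cone_hull)
  have gH: "g \<in> Hc"
  proof (rule ccontr)
    assume "g \<notin> Hc"
    then obtain w b where wb: "w \<bullet> g < b" "\<forall>x\<in>Hc. w \<bullet> x > b"
      using separating_hyperplane_closed_point[OF cv cl] by blast
    have 0: "0 \<in> Hc" unfolding Hc_def by (rule convex_cone_hull_contains_0)
    then have "w \<bullet> 0 > b" using wb(2) by blast
    then have b0: "b < 0" by simp
    have "0 \<le> a i \<bullet> w" if i: "i \<in> I" for i
    proof (rule ccontr)
      assume neg: "\<not> 0 \<le> a i \<bullet> w"
      define t where "t = b / (w \<bullet> a i)"
      have t0: "0 \<le> t" using neg b0 unfolding t_def by (simp add: inner_commute divide_nonpos_neg less_imp_le)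
      have "a i \<in> Hc" unfolding Hc_def using i by (intro hull_inc) simp
      then have "t *\<^sub>R a i \<in> Hc" unfolding Hc_def using t0 conicD[OF conic_convex_cone_hull] by blast
      then have "w \<bullet> (t *\<^sub>R a i) > b" using wb by blast
      moreover have "w \<bullet> (t *\<^sub>R a i) = b" using neg unfolding t_def by (simp add: inner_commute)
      ultimately show False by simp
    qed
    then have "0 \<le> g \<bullet> w" using H by blast
    then show False using wb b0 by (simp add: inner_commute)
  qed
  then have "g \<in> K" using HK by blast
  then show ?thesis unfolding K_def by simp
qed

lemma small_step:
  fixes a :: "'i \<Rightarrow> 'a::euclidean_space"
  assumes fin: "finite I" and feas: "\<forall>i\<in>I. b i \<le> a i \<bullet> x0"
    and act: "\<forall>i\<in>I. a i \<bullet> x0 = b i \<longrightarrow> 0 \<le> a i \<bullet> d"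
  shows "\<exists>e>0. \<forall>h. 0 < h \<and> h < e \<longrightarrow> (\<forall>i\<in>I. b i \<le> a i \<bullet> (x0 + h *\<^sub>R d))"
proof -
  define A where "A = {i\<in>I. a i \<bullet> x0 = b i}"
  define q where "q i = (a i \<bullet> x0 - b i) / (\<bar>a i \<bullet> d\<bar> + 1)" for i
  define e where "e = Min (insert 1 (q ` (I - A)))"
  have finE: "finite (insert 1 (q ` (I - A)))" using fin by simp
  have qpos: "0 < q i" if "i \<in> I - A" for i
  proof -
    have "b i < a i \<bullet> x0" using that feas unfolding A_def by force
    then show ?thesis unfolding q_def by (simp add: add_pos_nonneg)
  qed
  have e0: "0 < e" unfolding e_def using finE qpos by (subst Min_gr_iff) auto
  have eq: "e \<le> q i" if "i \<in> I - A" for i unfolding e_def using finE that by (intro Min_le) auto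
  show ?thesis
  proof (intro exI[of _ e] conjI allI impI ballI)
    show "0 < e" by (rule e0)
    fix h i assume h: "0 < h \<and> h < e" and i: "i \<in> I"
    have ex: "a i \<bullet> (x0 + h *\<^sub>R d) = a i \<bullet> x0 + h * (a i \<bullet> d)" by (simp add: inner_add_right)
    show "b i \<le> a i \<bullet> (x0 + h *\<^sub>R d)"
    proof (cases "i \<in> A")
      case True
      then have "a i \<bullet> x0 = b i" "0 \<le> a i \<bullet> d" using act unfolding A_def by auto
      then show ?thesis unfolding ex using h by simp
    next
      case False
      then have iA: "i \<in> I - A" using i by simp
      have hq: "h < q i" using h eq[OF iA] by simp
      have pos: "0 < \<bar>a i \<bullet> d\<bar> + 1" by simp
      have f1: "h * (\<bar>a i \<bullet> d\<bar> + 1) < a i \<bullet> x0 - b i"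
        using hq pos unfolding q_def by (simp add: pos_less_divide_eq)
      have m1: "h * (- (a i \<bullet> d)) \<le> h * \<bar>a i \<bullet> d\<bar>" by (rule mult_left_mono) (use h in auto)
      have f2: "- (h * (a i \<bullet> d)) \<le> h * (\<bar>a i \<bullet> d\<bar> + 1)"
        using m1 h by (simp add: algebra_simps)
      show ?thesis unfolding ex using f1 f2 by linarith
    qed
  qed
qed

lemma kkt_poly:
  fixes a :: "'i \<Rightarrow> 'a::euclidean_space" and J :: "'a \<Rightarrow> real"
  assumes fin: "finite I" and feas: "\<forall>i\<in>I. b i \<le> a i \<bullet> x0"
    and opt: "\<forall>x. (\<forall>i\<in>I. b i \<le> a i \<bullet> x) \<longrightarrow> J x0 \<le> J x"
    and der: "\<forall>d. ((\<lambda>t. J (x0 + t *\<^sub>R d)) has_real_derivative (g \<bullet> d)) (at 0)"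
  shows "\<exists>lm. (\<forall>i\<in>I. 0 \<le> lm i) \<and> (\<forall>i\<in>I. lm i * (a i \<bullet> x0 - b i) = 0) \<and> g = (\<Sum>i\<in>I. lm i *\<^sub>R a i)"
proof -
  define A where "A = {i\<in>I. a i \<bullet> x0 = b i}"
  have finA: "finite A" using fin unfolding A_def by simp
  have H: "\<forall>d. (\<forall>i\<in>A. 0 \<le> a i \<bullet> d) \<longrightarrow> 0 \<le> g \<bullet> d"
  proof (intro allI impI)
    fix d assume dA: "\<forall>i\<in>A. 0 \<le> a i \<bullet> d"
    show "0 \<le> g \<bullet> d"
    proof (rule ccontr)
      assume "\<not> 0 \<le> g \<bullet> d"
      then have neg: "g \<bullet> d < 0" by simp
      obtain \<delta> where \<delta>: "\<delta> > 0" "\<forall>h>0. h < \<delta> \<longrightarrow> J (x0 + (0 + h) *\<^sub>R d) < J (x0 + 0 *\<^sub>R d)"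
        using DERIV_neg_dec_right[OF der[rule_format, of d] neg] by blast
      have act: "\<forall>i\<in>I. a i \<bullet> x0 = b i \<longrightarrow> 0 \<le> a i \<bullet> d" using dA unfolding A_def by blast
      obtain e where e: "e > 0" "\<forall>h. 0 < h \<and> h < e \<longrightarrow> (\<forall>i\<in>I. b i \<le> a i \<bullet> (x0 + h *\<^sub>R d))"
        using small_step[OF fin feas act] by blast
      define h where "h = min \<delta> e / 2"
      have h0: "0 < h" and h1: "h < \<delta>" and h2: "h < e" using \<delta>(1) e(1) unfolding h_def by auto
      have "J (x0 + h *\<^sub>R d) < J x0" using \<delta>(2) h0 h1 by simp
      moreover have "J x0 \<le> J (x0 + h *\<^sub>R d)" using opt e(2) h0 h2 by blast
      ultimately show False by simp
    qed
  qed
  obtain lm where lm: "\<forall>i\<in>A. 0 \<le> lm i" "g = (\<Sum>i\<in>A. lm i *\<^sub>R a i)"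
    using farkas[OF finA H] by blast
  define lm' where "lm' i = (if i \<in> A then lm i else 0)" for i
  have "(\<Sum>i\<in>I. lm' i *\<^sub>R a i) = (\<Sum>i\<in>I. if i \<in> A then lm i *\<^sub>R a i else 0)"
    unfolding lm'_def by (rule sum.cong) auto
  also have "\<dots> = (\<Sum>i\<in>I \<inter> A. lm i *\<^sub>R a i)" using fin by (rule sum.inter_restrict[symmetric])
  also have "I \<inter> A = A" unfolding A_def by auto
  finally have gs: "g = (\<Sum>i\<in>I. lm' i *\<^sub>R a i)" using lm(2) by simp
  show ?thesis
  proof (intro exI[of _ lm'] conjI ballI)
    fix i assume "i \<in> I"
    show "0 \<le> lm' i" using lm(1) unfolding lm'_def by auto
    show "lm' i * (a i \<bullet> x0 - b i) = 0" unfolding lm'_def A_def by auto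
  qed (rule gs)
qed

definition cA :: "real^'n^'n \<Rightarrow> real^'n^'l \<Rightarrow> ('n + 'n) + (('n + 'n) + ('l + 'l)) \<Rightarrow> (real^'n) \<times> (real^'n)" where
  "cA Lm Fm i = (case i of
      Inl (Inl n) \<Rightarrow> (axis n 1, 0) | Inl (Inr n) \<Rightarrow> (- axis n 1, 0)
    | Inr (Inl (Inl n)) \<Rightarrow> (axis n 1, - Lm$n) | Inr (Inl (Inr n)) \<Rightarrow> (- axis n 1, Lm$n)
    | Inr (Inr (Inl l)) \<Rightarrow> (0, - Fm$l) | Inr (Inr (Inr l)) \<Rightarrow> (0, Fm$l))"

definition cb :: "real^'n \<Rightarrow> real^'n \<Rightarrow> real^'n \<Rightarrow> real^'n \<Rightarrow> real^'l \<Rightarrow> ('n + 'n) + (('n + 'n) + ('l + 'l)) \<Rightarrow> real" where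
  "cb lo hi q k f i = (case i of
      Inl (Inl n) \<Rightarrow> lo$n - q$n | Inl (Inr n) \<Rightarrow> q$n - hi$n
    | Inr (Inl (Inl n)) \<Rightarrow> k$n | Inr (Inl (Inr n)) \<Rightarrow> - k$n
    | Inr (Inr (Inl l)) \<Rightarrow> - f$l | Inr (Inr (Inr l)) \<Rightarrow> - f$l)"

lemma row_inner: "(A$n) \<bullet> x = (A *v x)$n"
  by (simp add: inner_vec_def matrix_vector_mult_def)

lemma cons_iff:
  "(\<forall>i. cb lo hi q k f i \<le> cA Lm Fm i \<bullet> (r, \<phi>)) \<longleftrightarrow>
    (\<forall>n. lo$n \<le> q$n + r$n \<and> q$n + r$n \<le> hi$n) \<and> (\<forall>n. r$n - (Lm *v \<phi>)$n = k$n) \<and>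
    (\<forall>l. - f$l \<le> (Fm *v \<phi>)$l \<and> (Fm *v \<phi>)$l \<le> f$l)"
  unfolding split_sum_all cA_def cb_def
  by (auto simp: inner_axis' row_inner algebra_simps intro: antisym)

lemma sum_UNIV_Plus: "(\<Sum>i\<in>(UNIV::('a::finite + 'b::finite) set). f i) = (\<Sum>i\<in>UNIV. f (Inl i)) + (\<Sum>i\<in>UNIV. f (Inr i))"
  by (subst UNIV_Plus_UNIV[symmetric], subst sum.Plus) (auto simp: comp_def)

lemma sum_axis: "(\<Sum>n\<in>UNIV. c n *\<^sub>R axis n (1::real)) = (\<chi> n. c n)"
proof -
  have "(\<Sum>n\<in>UNIV. c n * axis n (1::real) $ m) = c m" for m
  proof -
    have "(\<Sum>n\<in>UNIV. c n * axis n (1::real) $ m) = (\<Sum>n\<in>UNIV. if n = m then c m else 0)"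
      by (rule sum.cong) (auto simp: axis_def)
    then show ?thesis by simp
  qed
  then show ?thesis by (simp add: vec_eq_iff)
qed

lemma sum_rows: "(\<Sum>n\<in>UNIV. c n *\<^sub>R (A::real^'m^'k)$n) = transpose A *v (\<chi> n. c n)"
  by (simp add: vec_eq_iff transpose_def matrix_vector_mult_def mult.commute)

context prob begin

lemma kkt_data:
  obtains lm where "\<forall>i. 0 \<le> lm i"
    "\<forall>i. lm i * (cA L F i \<bullet> (r', \<phi>') - cb qlo qhi qp (d - qb - qp) f i) = 0"
    "((\<chi> n. deriv (c n) (qp$n + r'$n)), 0) = (\<Sum>i\<in>UNIV. lm i *\<^sub>R cA L F i)"
proof -
  let ?k = "d - qb - qp"
  let ?a = "cA L F" and ?b = "cb qlo qhi qp ?k f"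
  define G where "G = (\<chi> n. deriv (c n) (qp$n + r'$n))"
  define J where "J = (\<lambda>x::(real^'n)\<times>(real^'n). gen_cost c qp (fst x))"
  have eqiff: "qb + qp + x - d = L *v y \<longleftrightarrow> (\<forall>n. x$n - (L *v y)$n = ?k$n)" for x y
    by (auto simp: vec_eq_iff algebra_simps)
  have feas: "\<forall>i\<in>UNIV. ?b i \<le> ?a i \<bullet> (r', \<phi>')"
    using cons_iff[of qlo qhi qp ?k f L F r' \<phi>'] box' p' fl' eqiff[of r' \<phi>'] unfolding box_ok_def by blast
  have opt: "\<forall>x. (\<forall>i\<in>UNIV. ?b i \<le> ?a i \<bullet> x) \<longrightarrow> J (r', \<phi>') \<le> J x"
  proof (intro allI impI)
    fix x :: "(real^'n)\<times>(real^'n)" assume H: "\<forall>i\<in>UNIV. ?b i \<le> ?a i \<bullet> x"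
    obtain r \<phi> where x: "x = (r, \<phi>)" by (cases x)
    have C: "(\<forall>n. qlo$n \<le> qp$n + r$n \<and> qp$n + r$n \<le> qhi$n) \<and> (\<forall>n. r$n - (L *v \<phi>)$n = ?k$n) \<and>
      (\<forall>l. - f$l \<le> (F *v \<phi>)$l \<and> (F *v \<phi>)$l \<le> f$l)"
      using H cons_iff[of qlo qhi qp ?k f L F r \<phi>] unfolding x by blast
    then have pe: "qb + qp + r - d = L *v \<phi>" using eqiff by blast
    have "FRp_feasible src dst B D f qlo qhi qb qp d r 0 (F *v \<phi>) \<phi>"
      unfolding FRp_feasible_def box_ok_def using C pe by (simp add: lap_mult)
    then have "FRp_obj c D qp r' \<omega>' \<le> FRp_obj c D qp r 0" using FRp_opt unfolding FRp_optimal_def by blast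
    then show "J (r', \<phi>') \<le> J x" unfolding J_def x using w0 by (simp add: FRp_obj_split)
  qed
  have der: "\<forall>dd. ((\<lambda>t. J ((r', \<phi>') + t *\<^sub>R dd)) has_real_derivative ((G, 0) \<bullet> dd)) (at 0)"
  proof
    fix dd :: "(real^'n)\<times>(real^'n)"
    obtain dr dp where dd: "dd = (dr, dp)" by (cases dd)
    have fe: "(\<lambda>t. J ((r', \<phi>') + t *\<^sub>R dd)) = (\<lambda>t. \<Sum>n\<in>UNIV. c n (qp$n + (r'$n + t * dr$n)))"
      unfolding J_def dd gen_cost_def by simp
    have dn: "((\<lambda>t. c n (qp$n + (r'$n + t * dr$n))) has_real_derivative G$n * dr$n) (at 0)" for n
    proof -
      have D1: "(c n has_real_derivative G$n) (at ((\<lambda>t. qp$n + (r'$n + t * dr$n)) 0))"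
        unfolding G_def using C1_deriv C1 by simp
      have D2: "((\<lambda>t. qp$n + (r'$n + t * dr$n)) has_real_derivative dr$n) (at 0)"
        by (auto intro!: derivative_eq_intros)
      show ?thesis using DERIV_chain2[OF D1 D2] by simp
    qed
    have "((\<lambda>t. \<Sum>n\<in>UNIV. c n (qp$n + (r'$n + t * dr$n))) has_real_derivative (\<Sum>n\<in>UNIV. G$n * dr$n)) (at 0)"
      by (rule DERIV_sum) (rule dn)
    moreover have "(\<Sum>n\<in>UNIV. G$n * dr$n) = (G, 0) \<bullet> dd" unfolding dd by (simp add: inner_vec_def)
    ultimately show "((\<lambda>t. J ((r', \<phi>') + t *\<^sub>R dd)) has_real_derivative ((G, 0) \<bullet> dd)) (at 0)"
      unfolding fe by simp
  qed
  obtain lm where lm: "\<forall>i\<in>UNIV. 0 \<le> lm i" "\<forall>i\<in>UNIV. lm i * (?a i \<bullet> (r', \<phi>') - ?b i) = 0"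
      "(G, 0) = (\<Sum>i\<in>UNIV. lm i *\<^sub>R ?a i)"
    using kkt_poly[OF finite feas opt der] by blast
  then show ?thesis using that unfolding G_def by blast
qed

end
context prob begin

lemma kkt_exists_aux: "\<exists>\<pi> mulow mubar. kkt \<pi> mulow mubar"
proof -
  obtain lm where lm0: "\<forall>i. 0 \<le> lm i"
    and cs: "\<forall>i. lm i * (cA L F i \<bullet> (r', \<phi>') - cb qlo qhi qp (d - qb - qp) f i) = 0"
    and gs: "((\<chi> n. deriv (c n) (qp$n + r'$n)), 0) = (\<Sum>i\<in>UNIV. lm i *\<^sub>R cA L F i)"
    by (rule kkt_data)
  define l1 where "l1 n = lm (Inl (Inl n))" for n
  define l2 where "l2 n = lm (Inl (Inr n))" for n
  define l3 where "l3 n = lm (Inr (Inl (Inl n)))" for n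
  define l4 where "l4 n = lm (Inr (Inl (Inr n)))" for n
  define l5 where "l5 l = lm (Inr (Inr (Inl l)))" for l
  define l6 where "l6 l = lm (Inr (Inr (Inr l)))" for l
  have fsum: "fst (\<Sum>i\<in>UNIV. lm i *\<^sub>R cA L F i) = (\<Sum>n\<in>UNIV. (l1 n - l2 n + l3 n - l4 n) *\<^sub>R axis n 1)"
    by (simp add: fst_sum sum_UNIV_Plus cA_def l1_def l2_def l3_def l4_def scaleR_diff_left scaleR_add_left
        sum.distrib sum_subtractf sum_negf)
  have ssum: "snd (\<Sum>i\<in>UNIV. lm i *\<^sub>R cA L F i) = (\<Sum>n\<in>UNIV. (l4 n - l3 n) *\<^sub>R L$n) + (\<Sum>l\<in>UNIV. (l6 l - l5 l) *\<^sub>R F$l)"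
    by (simp add: snd_sum sum_UNIV_Plus cA_def l3_def l4_def l5_def l6_def scaleR_diff_left
        sum.distrib sum_subtractf sum_negf)
  define \<pi> where "\<pi> = (\<chi> n. l4 n - l3 n)"
  define mubar where "mubar = (\<chi> l. l5 l)"
  define mulow where "mulow = (\<chi> l. l6 l)"
  have Geq: "deriv (c n) (qp$n + r'$n) = l1 n - l2 n + l3 n - l4 n" for n
  proof -
    have "(\<chi> n. deriv (c n) (qp$n + r'$n)) = (\<chi> n. l1 n - l2 n + l3 n - l4 n)"
      using arg_cong[OF gs, of fst] unfolding fsum sum_axis by simp
    then show ?thesis by (simp add: vec_eq_iff)
  qed
  have S0: "L *v \<pi> + CB *v (mulow - mubar) = 0"
  proof -
    have "0 = (\<Sum>n\<in>UNIV. (l4 n - l3 n) *\<^sub>R L$n) + (\<Sum>l\<in>UNIV. (l6 l - l5 l) *\<^sub>R F$l)"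
      using arg_cong[OF gs, of snd] unfolding ssum by simp
    also have "\<dots> = transpose L *v \<pi> + transpose F *v (mulow - mubar)"
    proof -
      have "(\<chi> l. l6 l - l5 l) = mulow - mubar" unfolding mulow_def mubar_def by (simp add: vec_eq_iff)
      moreover have "(\<chi> n. l4 n - l3 n) = \<pi>" unfolding \<pi>_def ..
      ultimately show ?thesis unfolding sum_rows by simp
    qed
    also have "transpose F = CB" using transpose_CB[of src dst B] by (metis transpose_transpose)
    finally have h: "0 = transpose L *v \<pi> + CB *v (mulow - mubar)" .
    show ?thesis using h[unfolded lap_sym] by (rule sym)
  qed
  have S: "L *v \<pi> = CB *v (mubar - mulow)"
    using S0 by (simp add: matrix_vector_mult_diff_distrib algebra_simps eq_neg_iff_add_eq_0[symmetric])
  have cs1: "l1 n * (r'$n - (qlo$n - qp$n)) = 0" for n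
    using cs[rule_format, of "Inl (Inl n)"] unfolding l1_def by (simp add: cA_def cb_def inner_axis')
  have cs2: "l2 n * (- r'$n - (qp$n - qhi$n)) = 0" for n
    using cs[rule_format, of "Inl (Inr n)"] unfolding l2_def by (simp add: cA_def cb_def inner_axis')
  have cs5: "l5 l * (- (F *v \<phi>')$l + f$l) = 0" for l
    using cs[rule_format, of "Inr (Inr (Inl l))"] unfolding l5_def by (simp add: cA_def cb_def row_inner)
  have cs6: "l6 l * ((F *v \<phi>')$l + f$l) = 0" for l
    using cs[rule_format, of "Inr (Inr (Inr l))"] unfolding l6_def by (simp add: cA_def cb_def row_inner)
  have df: "dual_feasible mulow mubar"
    unfolding dual_feasible_def mulow_def mubar_def l5_def l6_def using lm0 by simp
  have CS1: "mubar \<bullet> (F *v \<phi>' - f) = 0"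
  proof -
    have "mubar$l * (F *v \<phi>' - f)$l = 0" for l using cs5[of l] unfolding mubar_def by (auto simp: algebra_simps)
    then show ?thesis unfolding inner_vec_def by (intro sum.neutral) simp
  qed
  have CS2: "mulow \<bullet> (- f - F *v \<phi>') = 0"
  proof -
    have "mulow$l * (- f - F *v \<phi>')$l = 0" for l using cs6[of l] unfolding mulow_def by (auto simp: algebra_simps)
    then show ?thesis unfolding inner_vec_def by (intro sum.neutral) simp
  qed
  have cm: "\<forall>n. \<forall>t\<in>{qlo$n - qp$n..qhi$n - qp$n}. c n (qp$n + r'$n) + \<pi>$n * r'$n \<le> c n (qp$n + t) + \<pi>$n * t"
  proof (intro allI ballI)
    fix n t assume t: "t \<in> {qlo$n - qp$n..qhi$n - qp$n}"
    define A where "A = qlo$n - qp$n"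
    define Bh where "Bh = qhi$n - qp$n"
    define x where "x = r'$n"
    define p where "p = \<pi>$n"
    have pv: "p = l4 n - l3 n" unfolding p_def \<pi>_def by simp
    have gi: "c n (qp$n + t) \<ge> c n (qp$n + x) + deriv (c n) (qp$n + x) * ((qp$n + t) - (qp$n + x))"
      by (rule grad_ineq[OF cvx[rule_format] C1_deriv[OF C1[rule_format]]])
    have ge: "deriv (c n) (qp$n + x) * ((qp$n + t) - (qp$n + x)) = l1 n * t - l1 n * x - l2 n * t + l2 n * x - p * t + p * x"
      unfolding x_def Geq pv by (simp add: algebra_simps)
    have P1: "0 \<le> l1 n * (t - A)" using t lm0 unfolding A_def l1_def by simp
    have P2: "0 \<le> l2 n * (Bh - t)" using t lm0 unfolding Bh_def l2_def by simp
    have C1': "l1 n * x = l1 n * A" using cs1[of n] unfolding x_def A_def by (simp add: algebra_simps)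
    have C2': "l2 n * x = l2 n * Bh" using cs2[of n] unfolding x_def Bh_def by (simp add: algebra_simps)
    have P1': "0 \<le> l1 n * t - l1 n * A" using P1 by (simp add: algebra_simps)
    have P2': "0 \<le> l2 n * Bh - l2 n * t" using P2 by (simp add: algebra_simps)
    have "c n (qp$n + x) + p * x \<le> c n (qp$n + t) + p * t"
      using gi ge P1' P2' C1' C2' by linarith
    then show "c n (qp$n + r'$n) + \<pi>$n * r'$n \<le> c n (qp$n + t) + \<pi>$n * t" unfolding x_def p_def .
  qed
  have "kkt \<pi> mulow mubar" unfolding kkt_def using df S cm CS1 CS2 by blast
  then show ?thesis by blast
qed

end
theorem proposition1:
  fixes src dst :: "'l::finite \<Rightarrow> 'n::finite"
    and B f zeta_mubar zeta_mulow :: "real^'l"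
    and D M qlo qhi zeta_pi chi_phi :: "real^'n"
    and c :: "'n \<Rightarrow> real \<Rightarrow> real"
    and qb qp d r r' \<omega>' \<phi>' :: "real^'n"
    and v' :: "real^'l"
  assumes no_loops: "\<forall>l. src l \<noteq> dst l"
    and connected: "graph_connected src dst"
    and B_pos: "\<forall>l. 0 < B$l"
    and D_pos: "\<forall>n. 0 < D$n"
    and M_pos: "\<forall>n. 0 < M$n"
    and gains_pos: "\<forall>n. 0 < zeta_pi$n \<and> 0 < chi_phi$n"
                   "\<forall>l. 0 < zeta_mubar$l \<and> 0 < zeta_mulow$l"
    and cost_strict_convex: "\<forall>n. strictly_convex (c n)"
    and cost_C1: "\<forall>n. c n C1_differentiable_on UNIV"
    and cost_deriv_invertible: "\<forall>n. surj (deriv (c n))"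
    and FR_opt: "FR_optimal c src dst B f qlo qhi qb qp d r"
    and FRp_opt: "FRp_optimal c src dst B D f qlo qhi qb qp d r' \<omega>' v' \<phi>'"
  shows "\<omega>' = 0 \<and> r = r' \<and>
         ptdf src dst B *v (qb + qp + r - d) = flowmat src dst B *v \<phi>' \<and>
         (\<exists>\<theta>' y'. incidence src dst *v y' = 0 \<and>
             v' = flowmat src dst B *v \<theta>' + y' \<and>
             flowmat src dst B *v \<phi>' = flowmat src dst B *v \<theta>' \<and>
             (\<forall>\<pi>' mulow' mubar'.
                cl_equilibrium c src dst B D M f qlo qhi zeta_pi chi_phi zeta_mubar zeta_mulow
                  qb qp d r' \<omega>' \<theta>' \<phi>' \<pi>' mulow' mubar'
                \<longleftrightarrow> FRp_primal_dual_optimal c src dst B D f qlo qhi qb qp d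
                  r' \<omega>' v' \<phi>' \<pi>' mulow' mubar'))"
  proof -
  interpret prob src dst B c D qlo qhi qb qp d r r' \<omega>' \<phi>' f v'
    using assms by unfold_locales auto
  have P1: "\<omega>' = 0 \<and> r = r' \<and> ptdf src dst B *v (qb + qp + r - d) = F *v \<phi>' \<and>
         incidence src dst *v (v' - F *v \<phi>') = 0" by (rule P1)
  have v: "v' = F *v \<phi>' + (v' - F *v \<phi>')" by simp
  show ?thesis
    using P1 v eq_kkt[OF gains_pos] pd_kkt[OF kkt_exists_aux] by blast
qed

end
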